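(* Let $(M,\tau)$ be a tracial von Neumann algebra, $m,n\in\mathbb N$, $x=(x_1,\dots,x_m)\in M_{\mathrm{sa},1}^m$ and $y=(y_1,\dots,y_n)\in M_{\mathrm{sa},1}^n$. Set $\delta_0=\delta(x,y)$, $\varepsilon_0=\varepsilon(x,y)$, $\gamma_0=\gamma(x,y)$, and assume $13mn\sqrt{\varepsilon_0}<\delta_0^2-(mn-1)\gamma_0$. Then there exists $v\in\mathscr U(M)$ such that $$\|v-1\|_\infty\leq\frac{8mn\varepsilon_0}{\delta_0^2-(mn-1)\gamma_0}\leq\frac{8}{13}\sqrt{\varepsilon_0}\quad\text{and}\quad\varepsilon(vxv^*,y)=0.$$
   Context: $M_{\mathrm{sa},1}=\{a\in M:a=a^*,\|a\|_\infty\leq1\}$. For $u\in\mathscr U(M)$, $uxu^*=(ux_1u^*,\dots,ux_mu^* )$. For $x\in M^m$, $y\in M^n$: $\delta(x,y)=\min_{i,j}\|[x_i,y_j]\|_2$; $\varepsilon(x,y)=\max_{i,j}|\tau(x_iy_j)|$; $\gamma(x,y)=\max\{|\langle[x_i,y_j],[x_{i'},y_{j'}]\rangle|:(i,j)\neq(i',j')\}$, with $\langle a,b\rangle=\tau(b^*a)$ and indices $1\leq i,i'\leq m$, $1\leq j,j'\leq n$. *)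

theory Defs
  imports "HOL-Analysis.Analysis"
begin

text \<open>
  Complex Hilbert spaces are modelled as real Hilbert spaces (type class
  real_inner plus complete_space) equipped with an orthogonal complex structure J
  (J is the multiplication by the imaginary unit).  Bounded complex-linear operators
  are the bounded real-linear operators commuting with J.  The operator norm of such
  an operator (w.r.t. the complex Hilbert norm, which coincides with the real norm)
  is the blinfun norm.
\<close>

definition cstruct :: "('h::{real_inner,complete_space} \<Rightarrow>\<^sub>L 'h) \<Rightarrow> bool" where
  "cstruct J \<longleftrightarrow> J o\<^sub>L J = - id_blinfun \<and> (\<forall>x y. inner (J x) (J y) = inner x y)"

definition cscale :: "('h::{real_inner,complete_space} \<Rightarrow>\<^sub>L 'h) \<Rightarrow> complex \<Rightarrow> ('h \<Rightarrow>\<^sub>L 'h) \<Rightarrow> ('h \<Rightarrow>\<^sub>L 'h)" where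
  "cscale J c T = Re c *\<^sub>R T + Im c *\<^sub>R (J o\<^sub>L T)"

definition BH :: "('h::{real_inner,complete_space} \<Rightarrow>\<^sub>L 'h) \<Rightarrow> ('h \<Rightarrow>\<^sub>L 'h) set" where
  "BH J = {T. T o\<^sub>L J = J o\<^sub>L T}"

text \<open>Hilbert space adjoint (for complex-linear operators the real and complex adjoints agree)\<close>
definition adj :: "('h::{real_inner,complete_space} \<Rightarrow>\<^sub>L 'h) \<Rightarrow> ('h \<Rightarrow>\<^sub>L 'h)" where
  "adj T = (THE S :: 'h \<Rightarrow>\<^sub>L 'h. \<forall>x y. inner (T x) y = inner x (S y))"

definition commutant :: "('h::{real_inner,complete_space} \<Rightarrow>\<^sub>L 'h) \<Rightarrow> ('h \<Rightarrow>\<^sub>L 'h) set \<Rightarrow> ('h \<Rightarrow>\<^sub>L 'h) set" where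
  "commutant J S = {T \<in> BH J. \<forall>s\<in>S. T o\<^sub>L s = s o\<^sub>L T}"

text \<open>von Neumann algebra: a self-adjoint subset of B(H) equal to its bicommutant
  (equivalently, a unital WOT-closed *-subalgebra of B(H))\<close>
definition von_neumann_algebra :: "('h::{real_inner,complete_space} \<Rightarrow>\<^sub>L 'h) \<Rightarrow> ('h \<Rightarrow>\<^sub>L 'h) set \<Rightarrow> bool" where
  "von_neumann_algebra J M \<longleftrightarrow> cstruct J \<and> M \<subseteq> BH J \<and> (\<forall>T\<in>M. adj T \<in> M)
     \<and> commutant J (commutant J M) = M"

definition selfadj :: "('h::{real_inner,complete_space} \<Rightarrow>\<^sub>L 'h) \<Rightarrow> bool" where
  "selfadj T \<longleftrightarrow> adj T = T"

text \<open>positive operator (for self-adjoint complex-linear T, the complex quadratic form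
  is real and equals the real one)\<close>
definition positive_op :: "('h::{real_inner,complete_space} \<Rightarrow>\<^sub>L 'h) \<Rightarrow> bool" where
  "positive_op T \<longleftrightarrow> selfadj T \<and> (\<forall>x. 0 \<le> inner (T x) x)"

definition op_le :: "('h::{real_inner,complete_space} \<Rightarrow>\<^sub>L 'h) \<Rightarrow> ('h \<Rightarrow>\<^sub>L 'h) \<Rightarrow> bool" where
  "op_le S T \<longleftrightarrow> positive_op (T - S)"

definition tracial_state :: "('h::{real_inner,complete_space} \<Rightarrow>\<^sub>L 'h) \<Rightarrow> ('h \<Rightarrow>\<^sub>L 'h) set \<Rightarrow> (('h \<Rightarrow>\<^sub>L 'h) \<Rightarrow> complex) \<Rightarrow> bool" where
  "tracial_state J M \<tau> \<longleftrightarrow>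
     (\<forall>S\<in>M. \<forall>T\<in>M. \<tau> (S + T) = \<tau> S + \<tau> T)
   \<and> (\<forall>c. \<forall>T\<in>M. \<tau> (cscale J c T) = c * \<tau> T)
   \<and> (\<forall>T\<in>M. \<tau> (adj T o\<^sub>L T) \<in> \<real> \<and> 0 \<le> Re (\<tau> (adj T o\<^sub>L T)))
   \<and> \<tau> id_blinfun = 1
   \<and> (\<forall>S\<in>M. \<forall>T\<in>M. \<tau> (S o\<^sub>L T) = \<tau> (T o\<^sub>L S))
   \<and> (\<forall>T\<in>M. \<tau> (adj T o\<^sub>L T) = 0 \<longrightarrow> T = 0)
   \<and> (\<forall>D T. D \<subseteq> M \<and> D \<noteq> {} \<and> (\<forall>a\<in>D. positive_op a)
        \<and> (\<forall>a\<in>D. \<forall>b\<in>D. \<exists>c\<in>D. op_le a c \<and> op_le b c)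
        \<and> T \<in> M \<and> (\<forall>a\<in>D. op_le a T) \<and> (\<forall>S\<in>M. (\<forall>a\<in>D. op_le a S) \<longrightarrow> op_le T S)
        \<longrightarrow> Re (\<tau> T) = (SUP a\<in>D. Re (\<tau> a)))"

definition tracial_vNa :: "('h::{real_inner,complete_space} \<Rightarrow>\<^sub>L 'h) \<Rightarrow> ('h \<Rightarrow>\<^sub>L 'h) set \<Rightarrow> (('h \<Rightarrow>\<^sub>L 'h) \<Rightarrow> complex) \<Rightarrow> bool" where
  "tracial_vNa J M \<tau> \<longleftrightarrow> von_neumann_algebra J M \<and> tracial_state J M \<tau>"

definition Msa1 :: "('h::{real_inner,complete_space} \<Rightarrow>\<^sub>L 'h) set \<Rightarrow> ('h \<Rightarrow>\<^sub>L 'h) set" where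
  "Msa1 M = {a \<in> M. selfadj a \<and> norm a \<le> 1}"

definition unitaries :: "('h::{real_inner,complete_space} \<Rightarrow>\<^sub>L 'h) set \<Rightarrow> ('h \<Rightarrow>\<^sub>L 'h) set" where
  "unitaries M = {u \<in> M. adj u o\<^sub>L u = id_blinfun \<and> u o\<^sub>L adj u = id_blinfun}"

definition norm2 :: "(('h::{real_inner,complete_space} \<Rightarrow>\<^sub>L 'h) \<Rightarrow> complex) \<Rightarrow> ('h \<Rightarrow>\<^sub>L 'h) \<Rightarrow> real" where
  "norm2 \<tau> a = sqrt (Re (\<tau> (adj a o\<^sub>L a)))"

definition commut :: "('h::{real_inner,complete_space} \<Rightarrow>\<^sub>L 'h) \<Rightarrow> ('h \<Rightarrow>\<^sub>L 'h) \<Rightarrow> ('h \<Rightarrow>\<^sub>L 'h)" where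
  "commut a b = (a o\<^sub>L b) - (b o\<^sub>L a)"

definition tip :: "(('h::{real_inner,complete_space} \<Rightarrow>\<^sub>L 'h) \<Rightarrow> complex) \<Rightarrow> ('h \<Rightarrow>\<^sub>L 'h) \<Rightarrow> ('h \<Rightarrow>\<^sub>L 'h) \<Rightarrow> complex" where
  "tip \<tau> a b = \<tau> (adj b o\<^sub>L a)"

text \<open>Tuples x = (x_1..x_m) are functions on indices 0..<m.\<close>
definition delta :: "(('h::{real_inner,complete_space} \<Rightarrow>\<^sub>L 'h) \<Rightarrow> complex) \<Rightarrow> nat \<Rightarrow> nat \<Rightarrow> (nat \<Rightarrow> ('h \<Rightarrow>\<^sub>L 'h)) \<Rightarrow> (nat \<Rightarrow> ('h \<Rightarrow>\<^sub>L 'h)) \<Rightarrow> real" where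
  "delta \<tau> m n x y = Min {norm2 \<tau> (commut (x i) (y j)) | i j. i < m \<and> j < n}"

definition epsilon :: "(('h::{real_inner,complete_space} \<Rightarrow>\<^sub>L 'h) \<Rightarrow> complex) \<Rightarrow> nat \<Rightarrow> nat \<Rightarrow> (nat \<Rightarrow> ('h \<Rightarrow>\<^sub>L 'h)) \<Rightarrow> (nat \<Rightarrow> ('h \<Rightarrow>\<^sub>L 'h)) \<Rightarrow> real" where
  "epsilon \<tau> m n x y = Max {cmod (\<tau> (x i o\<^sub>L y j)) | i j. i < m \<and> j < n}"

text \<open>gamma: maximum over pairs of distinct index pairs; taken to be 0 if there is
  no such pair (m = n = 1), which is harmless since it is multiplied by mn - 1 = 0.
  Inserting 0 does not change the maximum otherwise, as all values are nonnegative.\<close>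
definition gamma :: "(('h::{real_inner,complete_space} \<Rightarrow>\<^sub>L 'h) \<Rightarrow> complex) \<Rightarrow> nat \<Rightarrow> nat \<Rightarrow> (nat \<Rightarrow> ('h \<Rightarrow>\<^sub>L 'h)) \<Rightarrow> (nat \<Rightarrow> ('h \<Rightarrow>\<^sub>L 'h)) \<Rightarrow> real" where
  "gamma \<tau> m n x y = Max (insert 0
     {cmod (tip \<tau> (commut (x i) (y j)) (commut (x i') (y j'))) | i j i' j'.
        i < m \<and> j < n \<and> i' < m \<and> j' < n \<and> (i, j) \<noteq> (i', j')})"

definition conj_tuple :: "('h::{real_inner,complete_space} \<Rightarrow>\<^sub>L 'h) \<Rightarrow> (nat \<Rightarrow> ('h \<Rightarrow>\<^sub>L 'h)) \<Rightarrow> (nat \<Rightarrow> ('h \<Rightarrow>\<^sub>L 'h))" where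
  "conj_tuple u x = (\<lambda>i. u o\<^sub>L x i o\<^sub>L adj u)"

end

theory Submission
  imports Defs
begin



lemma parallelogram_sq:
  fixes a b :: "'a::real_inner"
  shows "(norm (a + b))\<^sup>2 + (norm (a - b))\<^sup>2 = 2 * (norm a)\<^sup>2 + 2 * (norm b)\<^sup>2"
  by (simp add: power2_norm_eq_inner inner_add_left inner_add_right inner_diff_left inner_diff_right inner_commute)

lemma riesz_repr:
  fixes f :: "'h::{real_inner,complete_space} \<Rightarrow> real"
  assumes bl: "bounded_linear f"
  shows "\<exists>z. \<forall>u. f u = inner z u"
proof (cases "\<forall>u. f u = 0")
  case True
  then show ?thesis by (intro exI[of _ 0]) simp
next
  case False
  then obtain u1 where u1: "f u1 \<noteq> 0" by blast
  interpret f: bounded_linear f by (rule bl)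
  define C where "C = {u. f u = 1}"
  have u1C: "(inverse (f u1)) *\<^sub>R u1 \<in> C" using u1 by (simp add: C_def f.scaleR)
  define d where "d = Inf ((\<lambda>u. (norm u)\<^sup>2) ` C)"
  have bdd: "bdd_below ((\<lambda>u. (norm u)\<^sup>2) ` C)"
    by (rule bdd_belowI[of _ 0]) auto
  have dle: "d \<le> (norm w)\<^sup>2" if "w \<in> C" for w
    unfolding d_def by (rule cInf_lower) (use that bdd in auto)
  have "\<exists>w\<in>C. (norm w)\<^sup>2 < d + 1 / (real k + 1)" for k
  proof -
    have "Inf ((\<lambda>u. (norm u)\<^sup>2) ` C) < d + 1 / (real k + 1)"
      unfolding d_def by (simp add: pos_add_strict)
    from cInf_lessD[OF _ this] u1C show ?thesis by auto
  qed
  then obtain u where uC: "\<And>k. u k \<in> C" and ub: "\<And>k. (norm (u k))\<^sup>2 < d + 1 / (real k + 1)"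
    by metis
  have cb: "(norm (u k - u l))\<^sup>2 \<le> 2 / (real k + 1) + 2 / (real l + 1)" for k l
  proof -
    have "(1/2::real) *\<^sub>R (u k + u l) \<in> C" using uC[of k] uC[of l]
      by (simp add: C_def f.scaleR f.add)
    then have "d \<le> (norm ((1/2::real) *\<^sub>R (u k + u l)))\<^sup>2" by (rule dle)
    also have "\<dots> = (norm (u k + u l))\<^sup>2 / 4"
      by (simp add: power2_eq_square)
    finally have "4 * d \<le> (norm (u k + u l))\<^sup>2" by simp
    with parallelogram_sq[of "u k" "u l"] ub[of k] ub[of l] show ?thesis by linarith
  qed
  have "Cauchy u"
  proof (rule metric_CauchyI)
    fix e :: real assume "e > 0"
    obtain N :: nat where N: "4 / (e\<^sup>2) < real N" using reals_Archimedean2 by blast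
    have e2: "e\<^sup>2 > 0" using \<open>e > 0\<close> by simp
    show "\<exists>N. \<forall>m\<ge>N. \<forall>n\<ge>N. dist (u m) (u n) < e"
    proof (intro exI allI impI)
      fix k l assume k: "k \<ge> N" and l: "l \<ge> N"
      have "2 / (real k + 1) \<le> 2 / (real N + 1)" using k by (simp add: frac_le)
      moreover have "2 / (real l + 1) \<le> 2 / (real N + 1)" using l by (simp add: frac_le)
      moreover have "4 / (real N + 1) < e\<^sup>2"
      proof -
        have "4 < real N * e\<^sup>2" using N e2 by (simp add: field_simps)
        moreover have "(real N + 1) * e\<^sup>2 = real N * e\<^sup>2 + e\<^sup>2" by (simp add: distrib_right)
        ultimately have "4 < (real N + 1) * e\<^sup>2" using e2 by linarith
        then show ?thesis by (simp add: field_simps)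
      qed
      ultimately have "(norm (u k - u l))\<^sup>2 < e\<^sup>2" using cb[of k l] by linarith
      then have "norm (u k - u l) < e" using \<open>e > 0\<close>
        by (meson abs_le_square_iff abs_norm_cancel less_le_not_le power2_less_imp_less order.strict_implies_order)
      then show "dist (u k) (u l) < e" by (simp add: dist_norm)
    qed
  qed
  then obtain u0 where lim: "u \<longlonglongrightarrow> u0" using Cauchy_convergent_iff convergent_def by blast
  have "(\<lambda>k. f (u k)) \<longlonglongrightarrow> f u0" by (rule f.tendsto[OF lim])
  moreover have "(\<lambda>k. f (u k)) = (\<lambda>k. 1)" using uC by (auto simp: C_def)
  ultimately have fu0: "f u0 = 1" using LIMSEQ_unique tendsto_const by metis
  have "(\<lambda>k. (norm (u k))\<^sup>2) \<longlonglongrightarrow> (norm u0)\<^sup>2"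
    by (intro tendsto_intros lim)
  moreover have "(\<lambda>k. d + 1 / (real k + 1)) \<longlonglongrightarrow> d + 0"
  proof (intro tendsto_intros)
    show "(\<lambda>k. 1 / (real k + 1)) \<longlonglongrightarrow> 0"
      using LIMSEQ_inverse_real_of_nat by (simp add: inverse_eq_divide add.commute)
  qed
  ultimately have n0: "(norm u0)\<^sup>2 \<le> d"
    using ub by (intro LIMSEQ_le[of "\<lambda>k. (norm (u k))\<^sup>2" _ "\<lambda>k. d + 1 / (real k + 1)"])
       (auto intro: less_imp_le)
  have orth: "inner u0 v = 0" if fv: "f v = 0" for v
  proof -
    define p where "p = inner u0 v"
    define q where "q = (norm v)\<^sup>2"
    have q0: "q \<ge> 0" by (simp add: q_def)
    have "0 \<le> 2 * t * p + t\<^sup>2 * q" for t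
    proof -
      have "u0 + t *\<^sub>R v \<in> C" using fu0 fv by (simp add: C_def f.add f.scaleR)
      then have "d \<le> (norm (u0 + t *\<^sub>R v))\<^sup>2" by (rule dle)
      also have "\<dots> = (norm u0)\<^sup>2 + 2 * t * p + t\<^sup>2 * q"
        unfolding p_def q_def power2_norm_eq_inner
        by (simp add: inner_add_left inner_add_right inner_commute power2_eq_square algebra_simps)
      finally show ?thesis using n0 by linarith
    qed
    define s where "s = 1 / (q + 1)"
    have s0: "s > 0" using q0 by (simp add: s_def)
    have sq: "s * q \<le> 1" using q0 by (simp add: s_def field_simps)
    from \<open>\<And>t. 0 \<le> 2 * t * p + t\<^sup>2 * q\<close>[of "- p * s"]
    have "0 \<le> - 2 * p\<^sup>2 * s + p\<^sup>2 * s * (s * q)" by (simp add: power2_eq_square algebra_simps)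
    moreover have "p\<^sup>2 * s * (s * q) \<le> p\<^sup>2 * s * 1"
      using sq s0 by (intro mult_left_mono) auto
    ultimately have "0 \<le> - (p\<^sup>2 * s)" by simp
    then have "p\<^sup>2 * s \<le> 0" by simp
    with s0 have "p\<^sup>2 \<le> 0" by (simp add: mult_le_0_iff)
    then show ?thesis unfolding p_def by simp
  qed
  have u0nz: "u0 \<noteq> 0" using fu0 by auto
  show ?thesis
  proof (intro exI[of _ "inverse ((norm u0)\<^sup>2) *\<^sub>R u0"] allI)
    fix w
    have "f (w - f w *\<^sub>R u0) = 0" using fu0 by (simp add: f.diff f.scaleR)
    then have "inner u0 (w - f w *\<^sub>R u0) = 0" by (rule orth)
    then have "inner u0 w = f w * (norm u0)\<^sup>2"
      by (simp add: inner_diff_right power2_norm_eq_inner)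
    then show "f w = inner (inverse ((norm u0)\<^sup>2) *\<^sub>R u0) w"
      using u0nz by (simp add: field_simps)
  qed
qed

lemma inner_eq_imp_eq:
  fixes a b :: "'a::real_inner"
  assumes "\<And>u. inner a u = inner b u"
  shows "a = b"
proof -
  have "inner (a - b) (a - b) = 0" using assms[of "a - b"] by (simp add: inner_diff_left)
  then show ?thesis by simp
qed

lemma adj_exists:
  fixes T :: "'h::{real_inner,complete_space} \<Rightarrow>\<^sub>L 'h"
  shows "\<exists>S::'h \<Rightarrow>\<^sub>L 'h. \<forall>x y. inner (T x) y = inner x (S y)"
proof -
  have "\<exists>z. \<forall>u. inner (T u) y = inner z u" for y
    by (rule riesz_repr, rule bounded_linear_compose[OF bounded_linear_inner_left blinfun.bounded_linear_right])
  then obtain g where g: "\<And>y u. inner (T u) y = inner (g y) u" by metis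
  have gadd: "g (y1 + y2) = g y1 + g y2" for y1 y2
    by (rule inner_eq_imp_eq) (simp add: g[symmetric] inner_add_left inner_add_right)
  have gscale: "g (r *\<^sub>R y) = r *\<^sub>R g y" for r y
    by (rule inner_eq_imp_eq) (simp add: g[symmetric])
  have gbound: "norm (g y) \<le> norm y * norm T" for y
  proof (cases "g y = 0")
    case True then show ?thesis by simp
  next
    case False
    have "(norm (g y))\<^sup>2 = inner (T (g y)) y" by (simp add: g power2_norm_eq_inner)
    also have "\<dots> \<le> norm (T (g y)) * norm y" by (rule Cauchy_Schwarz_ineq2[THEN order_trans[OF abs_ge_self]])
    also have "\<dots> \<le> norm T * norm (g y) * norm y" by (intro mult_right_mono norm_blinfun) auto
    finally have "norm (g y) * norm (g y) \<le> (norm T * norm y) * norm (g y)"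
      by (simp add: power2_eq_square algebra_simps)
    then have "norm (g y) \<le> norm T * norm y" using False by simp
    then show ?thesis by (simp add: mult.commute)
  qed
  have bl: "bounded_linear g"
    by (rule bounded_linear_intro[OF gadd gscale gbound])
  show ?thesis
  proof (intro exI[of _ "Blinfun g"] allI)
    fix x y
    have "inner (T x) y = inner (g y) x" by (rule g)
    also have "\<dots> = inner x (g y)" by (rule inner_commute)
    finally show "inner (T x) y = inner x (Blinfun g y)" by (simp add: bounded_linear_Blinfun_apply[OF bl])
  qed
qed

lemma adj_eqI:
  fixes T S :: "'h::{real_inner,complete_space} \<Rightarrow>\<^sub>L 'h"
  assumes "\<And>x y. inner (T x) y = inner x (S y)"
  shows "adj T = S"
  unfolding adj_def
proof (rule the_equality)
  show "\<forall>x y. inner (T x) y = inner x (S y)" using assms by blast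
  fix S' :: "'h \<Rightarrow>\<^sub>L 'h" assume S': "\<forall>x y. inner (T x) y = inner x (S' y)"
  have eqS: "inner (S' y) x = inner (S y) x" for x y
  proof -
    have "inner (S' y) x = inner x (S' y)" by (rule inner_commute)
    also have "\<dots> = inner (T x) y" using S' by simp
    also have "\<dots> = inner x (S y)" by (rule assms)
    also have "\<dots> = inner (S y) x" by (rule inner_commute)
    finally show ?thesis .
  qed
  show "S' = S"
    by (rule blinfun_eqI, rule inner_eq_imp_eq, rule eqS)
qed

lemma adj_char:
  fixes T :: "'h::{real_inner,complete_space} \<Rightarrow>\<^sub>L 'h"
  shows "inner (T x) y = inner x (adj T y)"
proof -
  obtain S :: "'h \<Rightarrow>\<^sub>L 'h" where S: "\<forall>x y. inner (T x) y = inner x (S y)" using adj_exists by blast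
  then have "adj T = S" by (intro adj_eqI) blast
  then show ?thesis using S by simp
qed

lemma adj_char2:
  fixes T :: "'h::{real_inner,complete_space} \<Rightarrow>\<^sub>L 'h"
  shows "inner (adj T x) y = inner x (T y)"
proof -
  have "inner (adj T x) y = inner y (adj T x)" by (rule inner_commute)
  also have "\<dots> = inner (T y) x" by (rule adj_char[symmetric])
  also have "\<dots> = inner x (T y)" by (rule inner_commute)
  finally show ?thesis .
qed

lemma adj_compose:
  fixes A B :: "'h::{real_inner,complete_space} \<Rightarrow>\<^sub>L 'h"
  shows "adj (A o\<^sub>L B) = adj B o\<^sub>L adj A"
  by (rule adj_eqI) (simp add: adj_char[of A] adj_char[of B])

lemma adj_add:
  fixes A B :: "'h::{real_inner,complete_space} \<Rightarrow>\<^sub>L 'h"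
  shows "adj (A + B) = adj A + adj B"
  by (rule adj_eqI) (simp add: adj_char[of A] adj_char[of B] blinfun.bilinear_simps inner_add_left inner_add_right)

lemma adj_diff:
  fixes A B :: "'h::{real_inner,complete_space} \<Rightarrow>\<^sub>L 'h"
  shows "adj (A - B) = adj A - adj B"
  by (rule adj_eqI) (simp add: adj_char[of A] adj_char[of B] blinfun.bilinear_simps inner_diff_left inner_diff_right)

lemma adj_uminus:
  fixes A :: "'h::{real_inner,complete_space} \<Rightarrow>\<^sub>L 'h"
  shows "adj (- A) = - adj A"
  by (rule adj_eqI) (simp add: adj_char[of A] blinfun.bilinear_simps)

lemma adj_scaleR:
  fixes A :: "'h::{real_inner,complete_space} \<Rightarrow>\<^sub>L 'h"
  shows "adj (r *\<^sub>R A) = r *\<^sub>R adj A"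
  by (rule adj_eqI) (simp add: adj_char[of A] blinfun.bilinear_simps)

lemma adj_id: "adj (id_blinfun :: 'h::{real_inner,complete_space} \<Rightarrow>\<^sub>L 'h) = id_blinfun"
  by (rule adj_eqI) simp

lemma adj_zero: "adj (0 :: 'h::{real_inner,complete_space} \<Rightarrow>\<^sub>L 'h) = 0"
  by (rule adj_eqI) simp

lemma adj_adj:
  fixes A :: "'h::{real_inner,complete_space} \<Rightarrow>\<^sub>L 'h"
  shows "adj (adj A) = A"
  by (rule adj_eqI) (simp add: adj_char2)

lemma adj_sum:
  fixes A :: "'i \<Rightarrow> 'h::{real_inner,complete_space} \<Rightarrow>\<^sub>L 'h"
  shows "adj (\<Sum>p\<in>P. A p) = (\<Sum>p\<in>P. adj (A p))"
proof (rule adj_eqI)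
  fix x y
  have "\<And>p. inner (A p x) y = inner x (adj (A p) y)" by (rule adj_char)
  then show "inner ((\<Sum>p\<in>P. A p) x) y = inner x ((\<Sum>p\<in>P. adj (A p)) y)"
    by (simp add: blinfun.sum_left inner_sum_left inner_sum_right)
qed

lemma norm_adj_le:
  fixes T :: "'h::{real_inner,complete_space} \<Rightarrow>\<^sub>L 'h"
  shows "norm (adj T) \<le> norm T"
proof (rule norm_blinfun_bound)
  show "0 \<le> norm T" by simp
  fix y
  show "norm (adj T y) \<le> norm T * norm y"
  proof (cases "adj T y = 0")
    case True then show ?thesis by simp
  next
    case False
    have "(norm (adj T y))\<^sup>2 = inner (T (adj T y)) y" by (simp add: adj_char[of T] power2_norm_eq_inner)
    also have "\<dots> \<le> norm (T (adj T y)) * norm y" by (rule Cauchy_Schwarz_ineq2[THEN order_trans[OF abs_ge_self]])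
    also have "\<dots> \<le> norm T * norm (adj T y) * norm y" by (intro mult_right_mono norm_blinfun) auto
    finally have "norm (adj T y) * norm (adj T y) \<le> (norm T * norm y) * norm (adj T y)"
      by (simp add: power2_eq_square algebra_simps)
    then show ?thesis using False by simp
  qed
qed

lemma norm_adj:
  fixes T :: "'h::{real_inner,complete_space} \<Rightarrow>\<^sub>L 'h"
  shows "norm (adj T) = norm T"
  using norm_adj_le[of T] norm_adj_le[of "adj T"] by (simp add: adj_adj)




lemma bc_assoc: "(A o\<^sub>L B) o\<^sub>L C = A o\<^sub>L (B o\<^sub>L C)"
  by (rule blinfun_eqI) simp
lemma bc_add_left: "(A + B) o\<^sub>L C = (A o\<^sub>L C) + (B o\<^sub>L C)"
  by (rule blinfun_eqI) (simp add: blinfun.bilinear_simps)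
lemma bc_add_right: "C o\<^sub>L (A + B) = (C o\<^sub>L A) + (C o\<^sub>L B)"
  by (rule blinfun_eqI) (simp add: blinfun.bilinear_simps)
lemma bc_diff_left: "(A - B) o\<^sub>L C = (A o\<^sub>L C) - (B o\<^sub>L C)"
  by (rule blinfun_eqI) (simp add: blinfun.bilinear_simps)
lemma bc_diff_right: "C o\<^sub>L (A - B) = (C o\<^sub>L A) - (C o\<^sub>L B)"
  by (rule blinfun_eqI) (simp add: blinfun.bilinear_simps)
lemma bc_minus_left: "(- A) o\<^sub>L C = - (A o\<^sub>L C)"
  by (rule blinfun_eqI) (simp add: blinfun.bilinear_simps)
lemma bc_minus_right: "C o\<^sub>L (- A) = - (C o\<^sub>L A)"
  by (rule blinfun_eqI) (simp add: blinfun.bilinear_simps)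
lemma bc_scaleR_left: "(r *\<^sub>R A) o\<^sub>L C = r *\<^sub>R (A o\<^sub>L C)"
  by (rule blinfun_eqI) (simp add: blinfun.bilinear_simps)
lemma bc_scaleR_right: "C o\<^sub>L (r *\<^sub>R A) = r *\<^sub>R (C o\<^sub>L A)"
  by (rule blinfun_eqI) (simp add: blinfun.bilinear_simps)
lemma bc_id_left: "id_blinfun o\<^sub>L A = A"
  by (rule blinfun_eqI) simp
lemma bc_id_right: "A o\<^sub>L id_blinfun = A"
  by (rule blinfun_eqI) simp
lemma bc_sum_left: "(\<Sum>p\<in>P. A p) o\<^sub>L C = (\<Sum>p\<in>P. A p o\<^sub>L C)"
  by (rule blinfun_eqI) (simp add: blinfun.sum_left)
lemma bc_sum_right: "C o\<^sub>L (\<Sum>p\<in>P. A p) = (\<Sum>p\<in>P. C o\<^sub>L A p)"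
  by (rule blinfun_eqI) (simp add: blinfun.sum_left blinfun.sum_right)

lemmas bc_simps = bc_add_left bc_add_right bc_diff_left bc_diff_right bc_minus_left bc_minus_right
  bc_scaleR_left bc_scaleR_right bc_id_left bc_id_right

locale tvna =
  fixes J :: "'h::{real_inner,complete_space} \<Rightarrow>\<^sub>L 'h"
    and M :: "('h \<Rightarrow>\<^sub>L 'h) set"
    and \<tau> :: "('h \<Rightarrow>\<^sub>L 'h) \<Rightarrow> complex"
  assumes tv: "tracial_vNa J M \<tau>"
begin

lemma vna: "von_neumann_algebra J M" using tv by (simp add: tracial_vNa_def)
lemma ts: "tracial_state J M \<tau>" using tv by (simp add: tracial_vNa_def)

lemma JJ: "J o\<^sub>L J = - id_blinfun" using vna by (simp add: von_neumann_algebra_def cstruct_def)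
lemma Jinner: "inner (J x) (J y) = inner x y" using vna by (simp add: von_neumann_algebra_def cstruct_def)
lemma JJ_apply: "J (J x) = - x" using JJ by (metis blinfun_apply_blinfun_compose blinfun_apply_id_blinfun blinfun.minus_left)

lemma M_BH: "T \<in> M \<Longrightarrow> T o\<^sub>L J = J o\<^sub>L T"
  using vna by (auto simp: von_neumann_algebra_def BH_def)
lemma M_adj: "T \<in> M \<Longrightarrow> adj T \<in> M"
  using vna by (auto simp: von_neumann_algebra_def)

lemma memM_iff: "Y \<in> M \<longleftrightarrow> Y o\<^sub>L J = J o\<^sub>L Y \<and> (\<forall>T\<in>commutant J M. Y o\<^sub>L T = T o\<^sub>L Y)"
proof -
  have "M = commutant J (commutant J M)" using vna by (simp add: von_neumann_algebra_def)
  then have "Y \<in> M \<longleftrightarrow> Y \<in> commutant J (commutant J M)" by (rule arg_cong[where f="\<lambda>S. Y \<in> S"])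
  also have "\<dots> \<longleftrightarrow> Y o\<^sub>L J = J o\<^sub>L Y \<and> (\<forall>T\<in>commutant J M. Y o\<^sub>L T = T o\<^sub>L Y)"
    unfolding commutant_def[of J "commutant J M"] BH_def by simp
  finally show ?thesis .
qed

lemma memM_I:
  assumes "Y o\<^sub>L J = J o\<^sub>L Y" "\<And>T. T \<in> commutant J M \<Longrightarrow> Y o\<^sub>L T = T o\<^sub>L Y"
  shows "Y \<in> M"
  using assms memM_iff by blast

lemma memM_D: "Y \<in> M \<Longrightarrow> T \<in> commutant J M \<Longrightarrow> Y o\<^sub>L T = T o\<^sub>L Y"
  using memM_iff by blast

lemma M_add: assumes "A \<in> M" "B \<in> M" shows "A + B \<in> M"
proof (rule memM_I)
  show "(A + B) o\<^sub>L J = J o\<^sub>L (A + B)" using M_BH[OF assms(1)] M_BH[OF assms(2)] by (simp add: bc_add_left bc_add_right)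
  fix T assume "T \<in> commutant J M"
  then show "(A + B) o\<^sub>L T = T o\<^sub>L (A + B)" using memM_D[OF assms(1)] memM_D[OF assms(2)] by (simp add: bc_add_left bc_add_right)
qed
lemma M_diff: assumes "A \<in> M" "B \<in> M" shows "A - B \<in> M"
proof (rule memM_I)
  show "(A - B) o\<^sub>L J = J o\<^sub>L (A - B)" using M_BH[OF assms(1)] M_BH[OF assms(2)] by (simp add: bc_diff_left bc_diff_right)
  fix T assume "T \<in> commutant J M"
  then show "(A - B) o\<^sub>L T = T o\<^sub>L (A - B)" using memM_D[OF assms(1)] memM_D[OF assms(2)] by (simp add: bc_diff_left bc_diff_right)
qed
lemma M_uminus: assumes "A \<in> M" shows "- A \<in> M"
proof (rule memM_I)
  show "(- A) o\<^sub>L J = J o\<^sub>L (- A)" using M_BH[OF assms(1)] by (simp add: bc_minus_left bc_minus_right)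
  fix T assume "T \<in> commutant J M"
  then show "(- A) o\<^sub>L T = T o\<^sub>L (- A)" using memM_D[OF assms(1)] by (simp add: bc_minus_left bc_minus_right)
qed
lemma M_scaleR: assumes "A \<in> M" shows "r *\<^sub>R A \<in> M"
proof (rule memM_I)
  show "(r *\<^sub>R A) o\<^sub>L J = J o\<^sub>L (r *\<^sub>R A)" using M_BH[OF assms(1)] by (simp add: bc_scaleR_left bc_scaleR_right)
  fix T assume "T \<in> commutant J M"
  then show "(r *\<^sub>R A) o\<^sub>L T = T o\<^sub>L (r *\<^sub>R A)" using memM_D[OF assms(1)] by (simp add: bc_scaleR_left bc_scaleR_right)
qed
lemma M_id: "id_blinfun \<in> M"
  by (rule memM_I) (simp_all add: bc_id_left bc_id_right)
lemma M_zero: "0 \<in> M"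
  by (rule memM_I) simp_all
lemma M_compose: assumes "A \<in> M" "B \<in> M" shows "A o\<^sub>L B \<in> M"
proof (rule memM_I)
  have "A o\<^sub>L B o\<^sub>L J = A o\<^sub>L (B o\<^sub>L J)" by (rule bc_assoc)
  also have "\<dots> = A o\<^sub>L (J o\<^sub>L B)" using M_BH[OF assms(2)] by simp
  also have "\<dots> = (A o\<^sub>L J) o\<^sub>L B" by (rule bc_assoc[symmetric])
  also have "\<dots> = (J o\<^sub>L A) o\<^sub>L B" using M_BH[OF assms(1)] by simp
  also have "\<dots> = J o\<^sub>L (A o\<^sub>L B)" by (rule bc_assoc)
  finally show "A o\<^sub>L B o\<^sub>L J = J o\<^sub>L (A o\<^sub>L B)" .
  fix T assume T: "T \<in> commutant J M"
  have "A o\<^sub>L B o\<^sub>L T = A o\<^sub>L (B o\<^sub>L T)" by (rule bc_assoc)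
  also have "\<dots> = A o\<^sub>L (T o\<^sub>L B)" using memM_D[OF assms(2) T] by simp
  also have "\<dots> = (A o\<^sub>L T) o\<^sub>L B" by (rule bc_assoc[symmetric])
  also have "\<dots> = (T o\<^sub>L A) o\<^sub>L B" using memM_D[OF assms(1) T] by simp
  also have "\<dots> = T o\<^sub>L (A o\<^sub>L B)" by (rule bc_assoc)
  finally show "A o\<^sub>L B o\<^sub>L T = T o\<^sub>L (A o\<^sub>L B)" .
qed
lemma M_J: "J \<in> M"
  by (rule memM_I) (auto simp: commutant_def BH_def)
lemma M_sum: "(\<And>p. p \<in> P \<Longrightarrow> A p \<in> M) \<Longrightarrow> (\<Sum>p\<in>P. A p) \<in> M"
proof (induction P rule: infinite_finite_induct)
  case (infinite A) then show ?case by (simp add: M_zero)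
next
  case empty then show ?case by (simp add: M_zero)
next
  case (insert x F) then show ?case by (simp add: M_add)
qed

lemma M_inverse:
  assumes X: "X \<in> M" and l: "W o\<^sub>L X = id_blinfun" and r: "X o\<^sub>L W = id_blinfun"
  shows "W \<in> M"
proof (rule memM_I)
  have "W o\<^sub>L J = W o\<^sub>L J o\<^sub>L (X o\<^sub>L W)" by (simp add: r bc_id_right)
  also have "\<dots> = W o\<^sub>L (J o\<^sub>L X) o\<^sub>L W" by (simp add: bc_assoc)
  also have "\<dots> = W o\<^sub>L (X o\<^sub>L J) o\<^sub>L W" by (simp add: M_BH[OF X])
  also have "\<dots> = (W o\<^sub>L X) o\<^sub>L J o\<^sub>L W" by (simp add: bc_assoc)
  also have "\<dots> = J o\<^sub>L W" by (simp add: l bc_id_left)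
  finally show "W o\<^sub>L J = J o\<^sub>L W" .
  fix T assume T: "T \<in> commutant J M"
  have "W o\<^sub>L T = W o\<^sub>L T o\<^sub>L (X o\<^sub>L W)" by (simp add: r bc_id_right)
  also have "\<dots> = W o\<^sub>L (T o\<^sub>L X) o\<^sub>L W" by (simp add: bc_assoc)
  also have "\<dots> = W o\<^sub>L (X o\<^sub>L T) o\<^sub>L W" by (simp add: memM_D[OF X T])
  also have "\<dots> = (W o\<^sub>L X) o\<^sub>L T o\<^sub>L W" by (simp add: bc_assoc)
  also have "\<dots> = T o\<^sub>L W" by (simp add: l bc_id_left)
  finally show "W o\<^sub>L T = T o\<^sub>L W" .
qed

lemma adj_J: "adj J = - J"
proof (rule adj_eqI)
  fix x y
  have "inner (J x) y = inner (J (J x)) (J y)" by (simp add: Jinner)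
  also have "\<dots> = inner x (- J y)" by (simp add: JJ_apply)
  finally show "inner (J x) y = inner x ((- J) y)" by (simp add: blinfun.minus_left)
qed

lemma tau_add: "S \<in> M \<Longrightarrow> T \<in> M \<Longrightarrow> \<tau> (S + T) = \<tau> S + \<tau> T"
  using ts by (simp add: tracial_state_def)
lemma tau_cscale: "T \<in> M \<Longrightarrow> \<tau> (cscale J c T) = c * \<tau> T"
  using ts by (simp add: tracial_state_def)
lemma tau_comm: "S \<in> M \<Longrightarrow> T \<in> M \<Longrightarrow> \<tau> (S o\<^sub>L T) = \<tau> (T o\<^sub>L S)"
  using ts by (simp add: tracial_state_def)
lemma tau_id: "\<tau> id_blinfun = 1"
  using ts by (simp add: tracial_state_def)
lemma tau_sq_real: "T \<in> M \<Longrightarrow> \<tau> (adj T o\<^sub>L T) \<in> \<real>"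
  using ts by (simp add: tracial_state_def)
lemma tau_sq_nonneg: "T \<in> M \<Longrightarrow> 0 \<le> Re (\<tau> (adj T o\<^sub>L T))"
  using ts by (simp add: tracial_state_def)

lemma tau_scaleR: "T \<in> M \<Longrightarrow> \<tau> (r *\<^sub>R T) = of_real r * \<tau> T"
  using tau_cscale[of T "of_real r"] by (simp add: cscale_def)
lemma tau_J: "T \<in> M \<Longrightarrow> \<tau> (J o\<^sub>L T) = \<i> * \<tau> T"
  using tau_cscale[of T "\<i>"] by (simp add: cscale_def)
lemma tau_zero: "\<tau> 0 = 0"
  using tau_scaleR[OF M_zero, of 0] by simp
lemma tau_uminus: "T \<in> M \<Longrightarrow> \<tau> (- T) = - \<tau> T"
  using tau_scaleR[of T "-1"] by simp
lemma tau_diff: "S \<in> M \<Longrightarrow> T \<in> M \<Longrightarrow> \<tau> (S - T) = \<tau> S - \<tau> T"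
  using tau_add[of S "- T"] tau_uminus[of T] M_uminus[of T] by simp
lemma tau_sum: "(\<And>p. p \<in> P \<Longrightarrow> A p \<in> M) \<Longrightarrow> \<tau> (\<Sum>p\<in>P. A p) = (\<Sum>p\<in>P. \<tau> (A p))"
proof (induction P rule: infinite_finite_induct)
  case (infinite A) then show ?case by (simp add: tau_zero)
next
  case empty then show ?case by (simp add: tau_zero)
next
  case (insert x F) then show ?case by (simp add: tau_add M_sum)
qed

end




lemma half_half: "(1/2::real) *\<^sub>R a + (1/2::real) *\<^sub>R a = (a::'a::real_vector)"
  by (simp add: scaleR_add_left[symmetric])

lemma scaleR_4: "(4::real) *\<^sub>R a = a + (a + (a + (a::'a::real_vector)))"
proof -
  have "(4::real) = 2 + 2" by simp
  then have "(4::real) *\<^sub>R a = 2 *\<^sub>R a + 2 *\<^sub>R a" by (simp only: scaleR_add_left)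
  then show ?thesis by (simp add: scaleR_2 add.assoc)
qed

context tvna
begin

lemma tau_selfadj_real:
  assumes S: "S \<in> M" and sa: "adj S = S"
  shows "\<tau> S \<in> \<real>"
proof -
  define P where "P = id_blinfun + S"
  define Q where "Q = id_blinfun - S"
  have PM: "P \<in> M" and QM: "Q \<in> M" using S M_id by (simp_all add: P_def Q_def M_add M_diff)
  have aP: "adj P = P" and aQ: "adj Q = Q" by (simp_all add: P_def Q_def adj_add adj_diff adj_id sa)
  have eq0: "(P o\<^sub>L P) - (Q o\<^sub>L Q) = 4 *\<^sub>R S"
    unfolding P_def Q_def by (rule blinfun_eqI) (simp add: blinfun.bilinear_simps algebra_simps scaleR_4)
  have eq: "(adj P o\<^sub>L P) - (adj Q o\<^sub>L Q) = 4 *\<^sub>R S" using eq0 by (simp add: aP aQ)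
  have "\<tau> ((adj P o\<^sub>L P) - (adj Q o\<^sub>L Q)) = \<tau> (adj P o\<^sub>L P) - \<tau> (adj Q o\<^sub>L Q)"
    using PM QM by (intro tau_diff M_compose M_adj)
  also have "\<dots> \<in> \<real>" using tau_sq_real[OF PM] tau_sq_real[OF QM] by (rule Reals_diff)
  finally have "\<tau> (4 *\<^sub>R S) \<in> \<real>" unfolding eq .
  then have "4 * \<tau> S \<in> \<real>" using tau_scaleR[OF S, of 4] by simp
  then show ?thesis by (simp add: complex_is_Real_iff)
qed

lemma tau_adj:
  assumes X: "X \<in> M"
  shows "\<tau> (adj X) = cnj (\<tau> X)"
proof -
  have Xs: "adj X \<in> M" using X by (rule M_adj)
  define S where "S = (1/2::real) *\<^sub>R (X + adj X)"
  define K where "K = (1/2::real) *\<^sub>R ((J o\<^sub>L adj X) - (J o\<^sub>L X))"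
  have SM: "S \<in> M" unfolding S_def using X Xs by (intro M_scaleR M_add)
  have KM: "K \<in> M" unfolding K_def using X Xs M_J by (intro M_scaleR M_diff M_compose)
  have JKM: "J o\<^sub>L K \<in> M" using KM M_J by (rule M_compose[rotated])
  have aS: "adj S = S" unfolding S_def by (simp add: adj_scaleR adj_add adj_adj add.commute)
  have aK: "adj K = K"
  proof -
    have "adj K = (1/2::real) *\<^sub>R ((X o\<^sub>L adj J) - (adj X o\<^sub>L adj J))"
      unfolding K_def by (simp add: adj_scaleR adj_diff adj_compose adj_adj)
    also have "\<dots> = K"
      unfolding adj_J K_def using M_BH[OF X] M_BH[OF Xs] by (simp add: bc_minus_right algebra_simps)
    finally show ?thesis .
  qed
  have XSK: "X = S + (J o\<^sub>L K)"
    unfolding S_def K_def by (rule blinfun_eqI) (simp add: blinfun.bilinear_simps JJ_apply algebra_simps half_half)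
  have XSK': "adj X = S - (J o\<^sub>L K)"
    unfolding S_def K_def by (rule blinfun_eqI) (simp add: blinfun.bilinear_simps JJ_apply algebra_simps half_half)
  have rS: "\<tau> S \<in> \<real>" by (rule tau_selfadj_real[OF SM aS])
  have rK: "\<tau> K \<in> \<real>" by (rule tau_selfadj_real[OF KM aK])
  have "\<tau> X = \<tau> S + \<i> * \<tau> K" by (subst XSK) (simp add: tau_add[OF SM JKM] tau_J[OF KM])
  moreover have "\<tau> (adj X) = \<tau> S - \<i> * \<tau> K" by (subst XSK') (simp add: tau_diff[OF SM JKM] tau_J[OF KM])
  ultimately show ?thesis using rS rK by (auto simp: Reals_cnj_iff complex_eq_iff)
qed

lemma tau_real_prod:
  assumes S: "S \<in> M" "adj S = S" and Y: "Y \<in> M" "adj Y = Y"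
  shows "Im (\<tau> (S o\<^sub>L Y)) = 0"
proof -
  have "cnj (\<tau> (S o\<^sub>L Y)) = \<tau> (adj (S o\<^sub>L Y))" using S Y by (simp add: tau_adj M_compose)
  also have "\<dots> = \<tau> (Y o\<^sub>L S)" by (simp add: adj_compose S Y)
  also have "\<dots> = \<tau> (S o\<^sub>L Y)" using S Y by (simp add: tau_comm)
  finally show ?thesis by (simp add: complex_eq_iff)
qed

lemma positive_zero: "positive_op (0::'h \<Rightarrow>\<^sub>L 'h)"
  by (simp add: positive_op_def selfadj_def adj_zero)

lemma tau_pos:
  assumes P: "P \<in> M" and pos: "positive_op P"
  shows "0 \<le> Re (\<tau> P)"
proof -
  have norm: "\<forall>D T. D \<subseteq> M \<and> D \<noteq> {} \<and> (\<forall>a\<in>D. positive_op a)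
        \<and> (\<forall>a\<in>D. \<forall>b\<in>D. \<exists>c\<in>D. op_le a c \<and> op_le b c)
        \<and> T \<in> M \<and> (\<forall>a\<in>D. op_le a T) \<and> (\<forall>S\<in>M. (\<forall>a\<in>D. op_le a S) \<longrightarrow> op_le T S)
        \<longrightarrow> Re (\<tau> T) = (SUP a\<in>D. Re (\<tau> a))"
    using ts by (simp add: tracial_state_def)
  have l1: "op_le 0 P" using pos by (simp add: op_le_def)
  have l2: "op_le P P" by (simp add: op_le_def positive_zero)
  have "Re (\<tau> P) = (SUP a\<in>{0, P}. Re (\<tau> a))"
    using norm[rule_format, of "{0, P}" P] P M_zero pos positive_zero l1 l2 by auto
  also have "\<dots> = max 0 (Re (\<tau> P))" by (simp add: tau_zero, subst cSup_eq_Max, auto)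
  finally show ?thesis by simp
qed

end




context tvna
begin

lemma tau_selfadj_le:
  assumes S: "S \<in> M" and sa: "adj S = S"
  shows "Re (\<tau> S) \<le> norm S"
proof -
  define P where "P = norm S *\<^sub>R id_blinfun - S"
  have PM: "P \<in> M" unfolding P_def using S M_id by (intro M_diff M_scaleR)
  have "positive_op P"
    unfolding positive_op_def selfadj_def
  proof
    show "adj P = P" unfolding P_def by (simp add: adj_diff adj_scaleR adj_id sa)
    show "\<forall>x. 0 \<le> inner (P x) x"
    proof
      fix x
      have "inner (S x) x \<le> norm (S x) * norm x" by (rule Cauchy_Schwarz_ineq2[THEN order_trans[OF abs_ge_self]])
      also have "\<dots> \<le> norm S * norm x * norm x" by (intro mult_right_mono norm_blinfun) auto
      finally have "inner (S x) x \<le> norm S * inner x x" by (simp add: power2_norm_eq_inner[symmetric] power2_eq_square mult.assoc)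
      then show "0 \<le> inner (P x) x" unfolding P_def by (simp add: blinfun.bilinear_simps inner_diff_left)
    qed
  qed
  then have "0 \<le> Re (\<tau> P)" by (rule tau_pos[OF PM])
  also have "\<tau> P = of_real (norm S) - \<tau> S" unfolding P_def
    using S M_id by (simp add: tau_diff M_scaleR tau_scaleR tau_id)
  finally show ?thesis by simp
qed

lemma tau_Re_bound:
  assumes X: "X \<in> M"
  shows "\<bar>Re (\<tau> X)\<bar> \<le> norm X"
proof -
  have Xs: "adj X \<in> M" using X by (rule M_adj)
  define S where "S = (1/2::real) *\<^sub>R (X + adj X)"
  have SM: "S \<in> M" unfolding S_def using X Xs by (intro M_scaleR M_add)
  have aS: "adj S = S" unfolding S_def by (simp add: adj_scaleR adj_add adj_adj add.commute)
  have "\<tau> S = of_real (1/2) * (\<tau> X + cnj (\<tau> X))" unfolding S_def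
    using X Xs by (simp add: tau_scaleR M_add tau_add tau_adj)
  then have "Re (\<tau> S * 2) = Re (\<tau> X + cnj (\<tau> X))" by simp
  then have ReS: "Re (\<tau> S) = Re (\<tau> X)" by simp
  have "norm S \<le> (1/2) * (norm X + norm (adj X))" unfolding S_def
    by (simp add: norm_triangle_ineq)
  then have nS: "norm S \<le> norm X" by (simp add: norm_adj)
  have "Re (\<tau> S) \<le> norm S" by (rule tau_selfadj_le[OF SM aS])
  moreover have "Re (\<tau> (- S)) \<le> norm (- S)" using SM aS by (intro tau_selfadj_le M_uminus) (simp_all add: adj_uminus)
  ultimately show ?thesis using nS ReS SM by (simp add: tau_uminus)
qed

end

lemma neumann:
  fixes B :: "'h::{real_normed_vector,complete_space} \<Rightarrow>\<^sub>L 'h"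
  assumes b: "norm B < 1"
  shows "\<exists>W. W o\<^sub>L (id_blinfun - B) = id_blinfun \<and> (id_blinfun - B) o\<^sub>L W = id_blinfun
            \<and> norm W \<le> 1 / (1 - norm B)"
proof -
  have "\<exists>!u. y + B u = u" for y
  proof -
    have "\<exists>!u. (\<lambda>u. y + B u) u = u"
    proof (rule banach_fix_type[of "norm B"])
      show "0 \<le> norm B" "norm B < 1" using b by auto
      show "\<forall>u v. dist (y + B u) (y + B v) \<le> norm B * dist u v"
        by (auto simp: dist_norm blinfun.diff_right[symmetric] norm_blinfun)
    qed
    then show ?thesis by simp
  qed
  then obtain g where g: "\<And>y. y + B (g y) = g y" and uniq: "\<And>y u. y + B u = u \<Longrightarrow> u = g y"
    by metis
  have gadd: "g (y1 + y2) = g y1 + g y2" for y1 y2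
  proof -
    have "(y1 + y2) + B (g y1 + g y2) = (y1 + B (g y1)) + (y2 + B (g y2))"
      by (simp add: blinfun.add_right algebra_simps)
    also have "\<dots> = g y1 + g y2" using g[of y1] g[of y2] by simp
    finally have "(y1 + y2) + B (g y1 + g y2) = g y1 + g y2" .
    then show ?thesis by (rule uniq[symmetric])
  qed
  have gscale: "g (r *\<^sub>R y) = r *\<^sub>R g y" for r y
  proof -
    have "(r *\<^sub>R y) + B (r *\<^sub>R g y) = r *\<^sub>R g y"
      using g[of y] by (simp add: blinfun.scaleR_right scaleR_add_right[symmetric])
    then show ?thesis by (rule uniq[symmetric])
  qed
  have gbound: "norm (g y) \<le> norm y * (1 / (1 - norm B))" for y
  proof -
    have "norm (g y) \<le> norm y + norm (B (g y))" using g[of y] norm_triangle_ineq[of y "B (g y)"] by simp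
    also have "\<dots> \<le> norm y + norm B * norm (g y)" using norm_blinfun[of B "g y"] by simp
    finally have "(1 - norm B) * norm (g y) \<le> norm y" by (simp add: algebra_simps)
    then show ?thesis using b by (simp add: field_simps)
  qed
  have bl: "bounded_linear g" by (rule bounded_linear_intro[OF gadd gscale gbound])
  define W where "W = Blinfun g"
  have Wg: "blinfun_apply W = g" unfolding W_def by (rule bounded_linear_Blinfun_apply[OF bl])
  have r: "(id_blinfun - B) o\<^sub>L W = id_blinfun"
  proof (rule blinfun_eqI)
    fix y show "((id_blinfun - B) o\<^sub>L W) y = id_blinfun y"
      using g[of y] by (simp add: Wg blinfun.diff_left) (metis add_diff_cancel_right')
  qed
  have l: "W o\<^sub>L (id_blinfun - B) = id_blinfun"
  proof (rule blinfun_eqI)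
    fix u have "(u - B u) + B u = u" by simp
    then have "u = g (u - B u)" by (rule uniq)
    then show "(W o\<^sub>L (id_blinfun - B)) u = id_blinfun u" by (simp add: Wg blinfun.diff_left)
  qed
  have "norm W \<le> 1 / (1 - norm B)"
    by (rule norm_blinfun_bound) (use b gbound in \<open>auto simp: Wg mult.commute\<close>)
  then show ?thesis using l r by blast
qed




definition binv :: "('h::{real_normed_vector,complete_space} \<Rightarrow>\<^sub>L 'h) \<Rightarrow> ('h \<Rightarrow>\<^sub>L 'h)" where
  "binv B = (SOME W. W o\<^sub>L (id_blinfun - B) = id_blinfun \<and> (id_blinfun - B) o\<^sub>L W = id_blinfun
            \<and> norm W \<le> 1 / (1 - norm B))"

lemma binv:
  assumes "norm B < 1"
  shows "binv B o\<^sub>L (id_blinfun - B) = id_blinfun" "(id_blinfun - B) o\<^sub>L binv B = id_blinfun"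
    "norm (binv B) \<le> 1 / (1 - norm B)"
proof -
  from someI_ex[OF neumann[OF assms]] show
    "binv B o\<^sub>L (id_blinfun - B) = id_blinfun" "(id_blinfun - B) o\<^sub>L binv B = id_blinfun"
    "norm (binv B) \<le> 1 / (1 - norm B)" unfolding binv_def by auto
qed

definition Wp :: "('h::{real_normed_vector,complete_space} \<Rightarrow>\<^sub>L 'h) \<Rightarrow> ('h \<Rightarrow>\<^sub>L 'h)" where
  "Wp A = binv ((1/2::real) *\<^sub>R A)"
definition Wm :: "('h::{real_normed_vector,complete_space} \<Rightarrow>\<^sub>L 'h) \<Rightarrow> ('h \<Rightarrow>\<^sub>L 'h)" where
  "Wm A = binv (- (1/2::real) *\<^sub>R A)"
definition cay :: "('h::{real_normed_vector,complete_space} \<Rightarrow>\<^sub>L 'h) \<Rightarrow> ('h \<Rightarrow>\<^sub>L 'h)" where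
  "cay A = 2 *\<^sub>R Wp A - id_blinfun"
definition cayc :: "('h::{real_normed_vector,complete_space} \<Rightarrow>\<^sub>L 'h) \<Rightarrow> ('h \<Rightarrow>\<^sub>L 'h)" where
  "cayc A = 2 *\<^sub>R Wm A - id_blinfun"
definition Rm :: "('h::{real_normed_vector,complete_space} \<Rightarrow>\<^sub>L 'h) \<Rightarrow> ('h \<Rightarrow>\<^sub>L 'h) \<Rightarrow> ('h \<Rightarrow>\<^sub>L 'h)" where
  "Rm A x = (((Wp A o\<^sub>L A) - A) o\<^sub>L x) - (x o\<^sub>L ((Wm A o\<^sub>L A) - A)) - ((Wp A o\<^sub>L A) o\<^sub>L x o\<^sub>L (Wm A o\<^sub>L A))"

lemma half_solve1:
  fixes a b c :: "'a::real_vector"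
  assumes h: "a + (1/2::real) *\<^sub>R b = c" shows "b = 2 *\<^sub>R (c - a)"
proof -
  have "c - a = (1/2::real) *\<^sub>R b" using h by (simp add: algebra_simps)
  then show ?thesis by simp
qed
lemma half_solve2:
  fixes a b c :: "'a::real_vector"
  assumes h: "a - (1/2::real) *\<^sub>R b = c" shows "b = 2 *\<^sub>R (a - c)"
proof -
  have "a - c = (1/2::real) *\<^sub>R b" using h by (simp add: algebra_simps)
  then show ?thesis by simp
qed
lemma norm_diff3: "norm (a - b - c) \<le> norm a + norm b + norm (c::'a::real_normed_vector)"
  by (meson add_mono norm_triangle_ineq4 order_refl order_trans)

lemma sw1: "a - b = c \<Longrightarrow> a - c = (b::'a::ab_group_add)" by (drule sym) simp
lemma sw2: "a + b = c \<Longrightarrow> a - c = - (b::'a::ab_group_add)" by (drule sym) simp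

lemma twice_solve:
  fixes y w :: "'a::real_vector"
  assumes h: "2 *\<^sub>R y = w" shows "y = (1/2::real) *\<^sub>R w"
  using h by (auto simp: h[symmetric])

context
  fixes A :: "'h::{real_normed_vector,complete_space} \<Rightarrow>\<^sub>L 'h"
  assumes nA: "norm A \<le> 1/3"
begin

lemma nhalf: "norm ((1/2::real) *\<^sub>R A) < 1" "norm (- (1/2::real) *\<^sub>R A) < 1"
  using nA by auto

lemma Wp_l: "Wp A o\<^sub>L (id_blinfun - (1/2::real) *\<^sub>R A) = id_blinfun"
  unfolding Wp_def by (rule binv(1)[OF nhalf(1)])
lemma Wp_r: "(id_blinfun - (1/2::real) *\<^sub>R A) o\<^sub>L Wp A = id_blinfun"
  unfolding Wp_def by (rule binv(2)[OF nhalf(1)])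
lemma Wm_l: "Wm A o\<^sub>L (id_blinfun + (1/2::real) *\<^sub>R A) = id_blinfun"
  using binv(1)[OF nhalf(2)] unfolding Wm_def by simp
lemma Wm_r: "(id_blinfun + (1/2::real) *\<^sub>R A) o\<^sub>L Wm A = id_blinfun"
  using binv(2)[OF nhalf(2)] unfolding Wm_def by simp

lemma norm_Wp: "norm (Wp A) \<le> 6/5"
proof -
  have "norm (Wp A) \<le> 1 / (1 - norm ((1/2::real) *\<^sub>R A))" unfolding Wp_def by (rule binv(3)[OF nhalf(1)])
  also have "\<dots> \<le> 6/5" using nA by (simp add: field_simps)
  finally show ?thesis .
qed
lemma norm_Wm: "norm (Wm A) \<le> 6/5"
proof -
  have "norm (Wm A) \<le> 1 / (1 - norm (- (1/2::real) *\<^sub>R A))" unfolding Wm_def by (rule binv(3)[OF nhalf(2)])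
  also have "\<dots> \<le> 6/5" using nA by (simp add: field_simps)
  finally show ?thesis .
qed

lemma Wp_app: "Wp A u - (1/2::real) *\<^sub>R Wp A (A u) = u"
  using arg_cong[OF Wp_l, of "\<lambda>T. T u"] by (simp add: blinfun.bilinear_simps)
lemma Wp_app2: "Wp A u - (1/2::real) *\<^sub>R A (Wp A u) = u"
  using arg_cong[OF Wp_r, of "\<lambda>T. T u"] by (simp add: blinfun.bilinear_simps)
lemma Wm_app: "Wm A u + (1/2::real) *\<^sub>R Wm A (A u) = u"
  using arg_cong[OF Wm_l, of "\<lambda>T. T u"] by (simp add: blinfun.bilinear_simps)
lemma Wm_app2: "Wm A u + (1/2::real) *\<^sub>R A (Wm A u) = u"
  using arg_cong[OF Wm_r, of "\<lambda>T. T u"] by (simp add: blinfun.bilinear_simps)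

lemma WpA: "Wp A o\<^sub>L A = 2 *\<^sub>R (Wp A - id_blinfun)"
proof (rule blinfun_eqI)
  fix u
  have "Wp A (A u) = 2 *\<^sub>R (Wp A u - u)"
    using half_solve2[OF Wp_app[of u]] .
  then show "(Wp A o\<^sub>L A) u = (2 *\<^sub>R (Wp A - id_blinfun)) u" by (simp add: blinfun.bilinear_simps)
qed

lemma WmA: "Wm A o\<^sub>L A = 2 *\<^sub>R (id_blinfun - Wm A)"
proof (rule blinfun_eqI)
  fix u
  have "Wm A (A u) = 2 *\<^sub>R (u - Wm A u)"
    using half_solve1[OF Wm_app[of u]] .
  then show "(Wm A o\<^sub>L A) u = (2 *\<^sub>R (id_blinfun - Wm A)) u" by (simp add: blinfun.bilinear_simps)
qed

lemma Wm_Wp_app: "Wm A (Wp A u) = (1/2::real) *\<^sub>R (Wm A u + Wp A u)"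
proof -
  define z where "z = Wp A u"
  have h1: "z = u + (1/2::real) *\<^sub>R A z" using Wp_app2[of u] unfolding z_def by (simp add: algebra_simps)
  have h2: "Wm A z = Wm A u + (1/2::real) *\<^sub>R Wm A (A z)"
    by (subst h1) (simp add: blinfun.bilinear_simps)
  have h3: "(1/2::real) *\<^sub>R Wm A (A z) = z - Wm A z" using Wm_app[of z] by (auto simp: algebra_simps)
  have "Wm A z = Wm A u + (z - Wm A z)" using h2 h3 by simp
  then have "2 *\<^sub>R Wm A z = Wm A u + z" by (simp add: algebra_simps scaleR_2)
  then have "Wm A z = (1/2::real) *\<^sub>R (Wm A u + z)" by (rule twice_solve)
  then show ?thesis unfolding z_def .
qed

lemma Wp_Wm_app: "Wp A (Wm A u) = (1/2::real) *\<^sub>R (Wp A u + Wm A u)"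
proof -
  define y where "y = Wm A u"
  have h1: "y = u - (1/2::real) *\<^sub>R A y" using Wm_app2[of u] unfolding y_def by (auto simp: algebra_simps)
  have h2: "Wp A y = Wp A u - (1/2::real) *\<^sub>R Wp A (A y)"
    by (subst h1) (simp add: blinfun.bilinear_simps)
  have h3: "(1/2::real) *\<^sub>R Wp A (A y) = Wp A y - y" using Wp_app[of y] by (auto simp: algebra_simps)
  have "Wp A y = Wp A u - (Wp A y - y)" using h2 h3 by simp
  then have "2 *\<^sub>R Wp A y = Wp A u + y" by (simp add: algebra_simps scaleR_2)
  then have "Wp A y = (1/2::real) *\<^sub>R (Wp A u + y)" by (rule twice_solve)
  then show ?thesis unfolding y_def .
qed

lemma cayc_cay: "cayc A o\<^sub>L cay A = id_blinfun"
  by (rule blinfun_eqI) (simp add: cayc_def cay_def blinfun.bilinear_simps Wm_Wp_app algebra_simps)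

lemma cay_cayc: "cay A o\<^sub>L cayc A = id_blinfun"
  by (rule blinfun_eqI) (simp add: cayc_def cay_def blinfun.bilinear_simps Wp_Wm_app algebra_simps)

lemma cay_minus_id: "cay A - id_blinfun = Wp A o\<^sub>L A"
  unfolding WpA cay_def by (simp add: algebra_simps scaleR_2)

lemma cay_eq: "cay A = id_blinfun + (Wp A o\<^sub>L A)"
  using cay_minus_id by (simp add: algebra_simps)

lemma cayc_eq: "cayc A = id_blinfun - (Wm A o\<^sub>L A)"
  unfolding cayc_def by (simp add: WmA algebra_simps scaleR_2)

lemma cay_expand: "cay A o\<^sub>L x o\<^sub>L cayc A = x + ((A o\<^sub>L x) - (x o\<^sub>L A)) + Rm A x"
  unfolding Rm_def cay_eq cayc_eq
  by (rule blinfun_eqI) (simp add: blinfun.bilinear_simps algebra_simps)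

lemma WpA2: "(Wp A o\<^sub>L A) - A = (1/2::real) *\<^sub>R (Wp A o\<^sub>L A o\<^sub>L A)"
proof (rule blinfun_eqI)
  fix u
  show "((Wp A o\<^sub>L A) - A) u = ((1/2::real) *\<^sub>R (Wp A o\<^sub>L A o\<^sub>L A)) u"
    using sw1[OF Wp_app[of "A u"]] by (simp add: blinfun.bilinear_simps)
qed

lemma WmA2: "(Wm A o\<^sub>L A) - A = - (1/2::real) *\<^sub>R (Wm A o\<^sub>L A o\<^sub>L A)"
proof (rule blinfun_eqI)
  fix u
  show "((Wm A o\<^sub>L A) - A) u = (- (1/2::real) *\<^sub>R (Wm A o\<^sub>L A o\<^sub>L A)) u"
    using sw2[OF Wm_app[of "A u"]] by (simp add: blinfun.bilinear_simps)
qed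

lemma norm_WpA: "norm (Wp A o\<^sub>L A) \<le> 6/5 * norm A"
  using norm_blinfun_compose[of "Wp A" A] norm_Wp by (meson mult_right_mono norm_ge_zero order_trans)
lemma norm_WmA: "norm (Wm A o\<^sub>L A) \<le> 6/5 * norm A"
  using norm_blinfun_compose[of "Wm A" A] norm_Wm by (meson mult_right_mono norm_ge_zero order_trans)

lemma norm_WpA2: "norm ((Wp A o\<^sub>L A) - A) \<le> 3/5 * (norm A)\<^sup>2"
proof -
  have "norm (Wp A o\<^sub>L A o\<^sub>L A) \<le> norm (Wp A o\<^sub>L A) * norm A" by (rule norm_blinfun_compose)
  also have "\<dots> \<le> 6/5 * norm A * norm A" by (intro mult_right_mono norm_WpA) auto
  finally show ?thesis unfolding WpA2 by (simp add: power2_eq_square)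
qed
lemma norm_WmA2: "norm ((Wm A o\<^sub>L A) - A) \<le> 3/5 * (norm A)\<^sup>2"
proof -
  have "norm (Wm A o\<^sub>L A o\<^sub>L A) \<le> norm (Wm A o\<^sub>L A) * norm A" by (rule norm_blinfun_compose)
  also have "\<dots> \<le> 6/5 * norm A * norm A" by (intro mult_right_mono norm_WmA) auto
  finally show ?thesis unfolding WmA2 by (simp add: power2_eq_square)
qed

lemma norm_Rm:
  assumes nx: "norm x \<le> 1"
  shows "norm (Rm A x) \<le> 66/25 * (norm A)\<^sup>2"
proof -
  have "norm (((Wp A o\<^sub>L A) - A) o\<^sub>L x) \<le> norm ((Wp A o\<^sub>L A) - A) * norm x" by (rule norm_blinfun_compose)
  also have "\<dots> \<le> norm ((Wp A o\<^sub>L A) - A)" using nx by (simp add: mult_left_le)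
  also have "\<dots> \<le> 3/5 * (norm A)\<^sup>2" by (rule norm_WpA2)
  finally have a: "norm (((Wp A o\<^sub>L A) - A) o\<^sub>L x) \<le> 3/5 * (norm A)\<^sup>2" .
  have "norm (x o\<^sub>L ((Wm A o\<^sub>L A) - A)) \<le> norm x * norm ((Wm A o\<^sub>L A) - A)" by (rule norm_blinfun_compose)
  also have "\<dots> \<le> norm ((Wm A o\<^sub>L A) - A)" using nx by (simp add: mult_left_le_one_le)
  also have "\<dots> \<le> 3/5 * (norm A)\<^sup>2" by (rule norm_WmA2)
  finally have b: "norm (x o\<^sub>L ((Wm A o\<^sub>L A) - A)) \<le> 3/5 * (norm A)\<^sup>2" .
  have "norm ((Wp A o\<^sub>L A) o\<^sub>L x o\<^sub>L (Wm A o\<^sub>L A)) \<le> norm ((Wp A o\<^sub>L A) o\<^sub>L x) * norm (Wm A o\<^sub>L A)"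
    by (rule norm_blinfun_compose)
  also have "\<dots> \<le> (norm (Wp A o\<^sub>L A) * norm x) * norm (Wm A o\<^sub>L A)"
    by (intro mult_right_mono norm_blinfun_compose) auto
  also have "\<dots> \<le> (6/5 * norm A * 1) * (6/5 * norm A)"
    using norm_WpA norm_WmA nx by (intro mult_mono) auto
  finally have c: "norm ((Wp A o\<^sub>L A) o\<^sub>L x o\<^sub>L (Wm A o\<^sub>L A)) \<le> 36/25 * (norm A)\<^sup>2"
    by (simp add: power2_eq_square)
  have "norm (Rm A x) \<le> 3/5 * (norm A)\<^sup>2 + 3/5 * (norm A)\<^sup>2 + 36/25 * (norm A)\<^sup>2"
    unfolding Rm_def using norm_diff3[of "((Wp A o\<^sub>L A) - A) o\<^sub>L x" "x o\<^sub>L ((Wm A o\<^sub>L A) - A)" "(Wp A o\<^sub>L A) o\<^sub>L x o\<^sub>L (Wm A o\<^sub>L A)"] a b c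
    by linarith
  then show ?thesis by simp
qed

end




lemma norm_compose_diff:
  fixes X Y X' Y' :: "'h::real_normed_vector \<Rightarrow>\<^sub>L 'h"
  shows "norm ((X o\<^sub>L Y) - (X' o\<^sub>L Y')) \<le> norm (X - X') * norm Y + norm X' * norm (Y - Y')"
proof -
  have "(X o\<^sub>L Y) - (X' o\<^sub>L Y') = ((X - X') o\<^sub>L Y) + (X' o\<^sub>L (Y - Y'))"
    by (simp add: bc_diff_left bc_diff_right)
  then have "norm ((X o\<^sub>L Y) - (X' o\<^sub>L Y')) \<le> norm ((X - X') o\<^sub>L Y) + norm (X' o\<^sub>L (Y - Y'))"
    by (simp add: norm_triangle_ineq)
  also have "\<dots> \<le> norm (X - X') * norm Y + norm X' * norm (Y - Y')"
    by (intro add_mono norm_blinfun_compose)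
  finally show ?thesis .
qed

context
  fixes A B :: "'h::{real_normed_vector,complete_space} \<Rightarrow>\<^sub>L 'h" and a :: real
  assumes nA: "norm A \<le> a" and nB: "norm B \<le> a" and a3: "a \<le> 1/3"
begin

lemma nA3: "norm A \<le> 1/3" using nA a3 by simp
lemma nB3: "norm B \<le> 1/3" using nB a3 by simp
lemma a0: "0 \<le> a" using nA norm_ge_zero order_trans by blast

lemma Wp_diff: "Wp A - Wp B = (1/2::real) *\<^sub>R (Wp A o\<^sub>L (A - B) o\<^sub>L Wp B)"
proof (rule blinfun_eqI)
  fix u
  define z where "z = Wp B u"
  have h1: "u = z - (1/2::real) *\<^sub>R B z" using Wp_app2[OF nB3, of u] unfolding z_def by simp
  have h2: "Wp A z = z + (1/2::real) *\<^sub>R Wp A (A z)" using Wp_app[OF nA3, of z] by (auto simp: algebra_simps)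
  have "Wp A u = Wp A z - (1/2::real) *\<^sub>R Wp A (B z)" by (subst h1) (simp add: blinfun.bilinear_simps)
  also have "\<dots> = z + (1/2::real) *\<^sub>R Wp A (A z - B z)" by (subst h2) (simp add: blinfun.bilinear_simps algebra_simps)
  finally show "(Wp A - Wp B) u = ((1/2::real) *\<^sub>R (Wp A o\<^sub>L (A - B) o\<^sub>L Wp B)) u"
    by (simp add: blinfun.bilinear_simps z_def)
qed

lemma Wm_diff: "Wm A - Wm B = - (1/2::real) *\<^sub>R (Wm A o\<^sub>L (A - B) o\<^sub>L Wm B)"
proof (rule blinfun_eqI)
  fix u
  define z where "z = Wm B u"
  have h1: "u = z + (1/2::real) *\<^sub>R B z" using Wm_app2[OF nB3, of u] unfolding z_def by simp
  have h2: "Wm A z = z - (1/2::real) *\<^sub>R Wm A (A z)" using Wm_app[OF nA3, of z] by (auto simp: algebra_simps)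
  have "Wm A u = Wm A z + (1/2::real) *\<^sub>R Wm A (B z)" by (subst h1) (simp add: blinfun.bilinear_simps)
  also have "\<dots> = z - (1/2::real) *\<^sub>R Wm A (A z - B z)" by (subst h2) (simp add: blinfun.bilinear_simps algebra_simps)
  finally show "(Wm A - Wm B) u = (- (1/2::real) *\<^sub>R (Wm A o\<^sub>L (A - B) o\<^sub>L Wm B)) u"
    by (simp add: blinfun.bilinear_simps z_def)
qed

lemma norm_triple: "norm (X o\<^sub>L Y o\<^sub>L Z) \<le> norm X * norm Y * norm Z"
  by (meson mult_right_mono norm_blinfun_compose norm_ge_zero order_trans)

lemma norm_Wp_diff: "norm (Wp A - Wp B) \<le> 18/25 * norm (A - B)"
proof -
  have "norm (Wp A - Wp B) = 1/2 * norm (Wp A o\<^sub>L (A - B) o\<^sub>L Wp B)" by (simp add: Wp_diff)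
  also have "\<dots> \<le> 1/2 * (norm (Wp A) * norm (A - B) * norm (Wp B))" by (intro mult_left_mono norm_triple) auto
  also have "\<dots> \<le> 1/2 * ((6/5) * norm (A - B) * (6/5))"
    using norm_Wp[OF nA3] norm_Wp[OF nB3] by (intro mult_left_mono mult_mono) auto
  finally show ?thesis by simp
qed

lemma norm_Wm_diff: "norm (Wm A - Wm B) \<le> 18/25 * norm (A - B)"
proof -
  have "norm (Wm A - Wm B) = 1/2 * norm (Wm A o\<^sub>L (A - B) o\<^sub>L Wm B)" by (simp add: Wm_diff)
  also have "\<dots> \<le> 1/2 * (norm (Wm A) * norm (A - B) * norm (Wm B))" by (intro mult_left_mono norm_triple) auto
  also have "\<dots> \<le> 1/2 * ((6/5) * norm (A - B) * (6/5))"
    using norm_Wm[OF nA3] norm_Wm[OF nB3] by (intro mult_left_mono mult_mono) auto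
  finally show ?thesis by simp
qed

lemma lip_WpA: "norm ((Wp A o\<^sub>L A) - (Wp B o\<^sub>L B)) \<le> 36/25 * norm (A - B)"
proof -
  have "norm ((Wp A o\<^sub>L A) - (Wp B o\<^sub>L B)) \<le> norm (Wp A - Wp B) * norm A + norm (Wp B) * norm (A - B)"
    by (rule norm_compose_diff)
  also have "\<dots> \<le> (18/25 * norm (A - B)) * (1/3) + 6/5 * norm (A - B)"
    using norm_Wp_diff norm_Wp[OF nB3] nA3 by (intro add_mono mult_mono) auto
  finally show ?thesis by simp
qed

lemma lip_WmA: "norm ((Wm A o\<^sub>L A) - (Wm B o\<^sub>L B)) \<le> 36/25 * norm (A - B)"
proof -
  have "norm ((Wm A o\<^sub>L A) - (Wm B o\<^sub>L B)) \<le> norm (Wm A - Wm B) * norm A + norm (Wm B) * norm (A - B)"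
    by (rule norm_compose_diff)
  also have "\<dots> \<le> (18/25 * norm (A - B)) * (1/3) + 6/5 * norm (A - B)"
    using norm_Wm_diff norm_Wm[OF nB3] nA3 by (intro add_mono mult_mono) auto
  finally show ?thesis by simp
qed

lemma lip_P: "norm (((Wp A o\<^sub>L A) - A) - ((Wp B o\<^sub>L B) - B)) \<le> 33/25 * a * norm (A - B)"
proof -
  have "((Wp A o\<^sub>L A) - A) - ((Wp B o\<^sub>L B) - B) = (1/2::real) *\<^sub>R (((Wp A o\<^sub>L A) o\<^sub>L A) - ((Wp B o\<^sub>L B) o\<^sub>L B))"
    by (simp add: WpA2[OF nA3] WpA2[OF nB3] algebra_simps)
  then have "norm (((Wp A o\<^sub>L A) - A) - ((Wp B o\<^sub>L B) - B)) = 1/2 * norm (((Wp A o\<^sub>L A) o\<^sub>L A) - ((Wp B o\<^sub>L B) o\<^sub>L B))"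
    by simp
  also have "\<dots> \<le> 1/2 * (norm ((Wp A o\<^sub>L A) - (Wp B o\<^sub>L B)) * norm A + norm (Wp B o\<^sub>L B) * norm (A - B))"
    by (intro mult_left_mono norm_compose_diff) auto
  also have "\<dots> \<le> 1/2 * ((36/25 * norm (A - B)) * a + (6/5 * a) * norm (A - B))"
    using lip_WpA norm_WpA[OF nB3] nA nB a0 by (intro mult_left_mono add_mono mult_mono) auto
  finally show ?thesis by (simp add: algebra_simps)
qed

lemma lip_P': "norm (((Wm A o\<^sub>L A) - A) - ((Wm B o\<^sub>L B) - B)) \<le> 33/25 * a * norm (A - B)"
proof -
  have "((Wm A o\<^sub>L A) - A) - ((Wm B o\<^sub>L B) - B) = - (1/2::real) *\<^sub>R (((Wm A o\<^sub>L A) o\<^sub>L A) - ((Wm B o\<^sub>L B) o\<^sub>L B))"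
    by (simp add: WmA2[OF nA3] WmA2[OF nB3] algebra_simps)
  then have "norm (((Wm A o\<^sub>L A) - A) - ((Wm B o\<^sub>L B) - B)) = 1/2 * norm (((Wm A o\<^sub>L A) o\<^sub>L A) - ((Wm B o\<^sub>L B) o\<^sub>L B))"
    by simp
  also have "\<dots> \<le> 1/2 * (norm ((Wm A o\<^sub>L A) - (Wm B o\<^sub>L B)) * norm A + norm (Wm B o\<^sub>L B) * norm (A - B))"
    by (intro mult_left_mono norm_compose_diff) auto
  also have "\<dots> \<le> 1/2 * ((36/25 * norm (A - B)) * a + (6/5 * a) * norm (A - B))"
    using lip_WmA norm_WmA[OF nB3] nA nB a0 by (intro mult_left_mono add_mono mult_mono) auto
  finally show ?thesis by (simp add: algebra_simps)
qed

lemma lip_Rm: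
  assumes nx: "norm x \<le> 1"
  shows "norm (Rm A x - Rm B x) \<le> 7 * a * norm (A - B)"
proof -
  define d where "d = norm (A - B)"
  have d0: "0 \<le> d" by (simp add: d_def)
  have eq: "Rm A x - Rm B x = ((((Wp A o\<^sub>L A) - A) - ((Wp B o\<^sub>L B) - B)) o\<^sub>L x)
     - (x o\<^sub>L (((Wm A o\<^sub>L A) - A) - ((Wm B o\<^sub>L B) - B)))
     - (((Wp A o\<^sub>L A) o\<^sub>L x o\<^sub>L (Wm A o\<^sub>L A)) - ((Wp B o\<^sub>L B) o\<^sub>L x o\<^sub>L (Wm B o\<^sub>L B)))"
    unfolding Rm_def by (rule blinfun_eqI) (simp add: blinfun.bilinear_simps algebra_simps)
  have t1: "norm ((((Wp A o\<^sub>L A) - A) - ((Wp B o\<^sub>L B) - B)) o\<^sub>L x) \<le> 33/25 * a * d"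
  proof -
    have "norm ((((Wp A o\<^sub>L A) - A) - ((Wp B o\<^sub>L B) - B)) o\<^sub>L x) \<le> norm (((Wp A o\<^sub>L A) - A) - ((Wp B o\<^sub>L B) - B)) * norm x"
      by (rule norm_blinfun_compose)
    also have "\<dots> \<le> norm (((Wp A o\<^sub>L A) - A) - ((Wp B o\<^sub>L B) - B))" using nx by (simp add: mult_left_le)
    also have "\<dots> \<le> 33/25 * a * d" unfolding d_def by (rule lip_P)
    finally show ?thesis .
  qed
  have t2: "norm (x o\<^sub>L (((Wm A o\<^sub>L A) - A) - ((Wm B o\<^sub>L B) - B))) \<le> 33/25 * a * d"
  proof -
    have "norm (x o\<^sub>L (((Wm A o\<^sub>L A) - A) - ((Wm B o\<^sub>L B) - B))) \<le> norm x * norm (((Wm A o\<^sub>L A) - A) - ((Wm B o\<^sub>L B) - B))"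
      by (rule norm_blinfun_compose)
    also have "\<dots> \<le> norm (((Wm A o\<^sub>L A) - A) - ((Wm B o\<^sub>L B) - B))" using nx by (simp add: mult_left_le_one_le)
    also have "\<dots> \<le> 33/25 * a * d" unfolding d_def by (rule lip_P')
    finally show ?thesis .
  qed
  have qx: "norm ((Wp A o\<^sub>L A o\<^sub>L x) - (Wp B o\<^sub>L B o\<^sub>L x)) \<le> 36/25 * d"
  proof -
    have "(Wp A o\<^sub>L A o\<^sub>L x) - (Wp B o\<^sub>L B o\<^sub>L x) = ((Wp A o\<^sub>L A) - (Wp B o\<^sub>L B)) o\<^sub>L x"
      by (simp add: bc_diff_left)
    then have "norm ((Wp A o\<^sub>L A o\<^sub>L x) - (Wp B o\<^sub>L B o\<^sub>L x)) \<le> norm ((Wp A o\<^sub>L A) - (Wp B o\<^sub>L B)) * norm x"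
      using norm_blinfun_compose by metis
    also have "\<dots> \<le> norm ((Wp A o\<^sub>L A) - (Wp B o\<^sub>L B))" using nx by (simp add: mult_left_le)
    also have "\<dots> \<le> 36/25 * d" unfolding d_def by (rule lip_WpA)
    finally show ?thesis .
  qed
  have qbx: "norm (Wp B o\<^sub>L B o\<^sub>L x) \<le> 6/5 * a"
  proof -
    have "norm (Wp B o\<^sub>L B o\<^sub>L x) \<le> norm (Wp B o\<^sub>L B) * norm x" by (rule norm_blinfun_compose)
    also have "\<dots> \<le> norm (Wp B o\<^sub>L B)" using nx by (simp add: mult_left_le)
    also have "\<dots> \<le> 6/5 * norm B" by (rule norm_WpA[OF nB3])
    also have "\<dots> \<le> 6/5 * a" using nB by simp
    finally show ?thesis .
  qed
  have t3: "norm (((Wp A o\<^sub>L A) o\<^sub>L x o\<^sub>L (Wm A o\<^sub>L A)) - ((Wp B o\<^sub>L B) o\<^sub>L x o\<^sub>L (Wm B o\<^sub>L B))) \<le> 432/125 * a * d"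
  proof -
    have "norm (((Wp A o\<^sub>L A) o\<^sub>L x o\<^sub>L (Wm A o\<^sub>L A)) - ((Wp B o\<^sub>L B) o\<^sub>L x o\<^sub>L (Wm B o\<^sub>L B)))
       \<le> norm ((Wp A o\<^sub>L A o\<^sub>L x) - (Wp B o\<^sub>L B o\<^sub>L x)) * norm (Wm A o\<^sub>L A) + norm (Wp B o\<^sub>L B o\<^sub>L x) * norm ((Wm A o\<^sub>L A) - (Wm B o\<^sub>L B))"
      by (rule norm_compose_diff)
    also have "\<dots> \<le> (36/25 * d) * (6/5 * a) + (6/5 * a) * (36/25 * d)"
    proof (intro add_mono mult_mono qx qbx)
      show "norm (Wm A o\<^sub>L A) \<le> 6/5 * a" using norm_WmA[OF nA3] nA by simp
      show "norm ((Wm A o\<^sub>L A) - (Wm B o\<^sub>L B)) \<le> 36/25 * d" unfolding d_def by (rule lip_WmA)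
    qed (use d0 a0 in auto)
    finally show ?thesis by (simp add: algebra_simps)
  qed
  have "norm (Rm A x - Rm B x) \<le> 33/25 * a * d + 33/25 * a * d + 432/125 * a * d"
    unfolding eq using norm_diff3[of "(((Wp A o\<^sub>L A) - A) - ((Wp B o\<^sub>L B) - B)) o\<^sub>L x"
       "x o\<^sub>L (((Wm A o\<^sub>L A) - A) - ((Wm B o\<^sub>L B) - B))"
       "((Wp A o\<^sub>L A) o\<^sub>L x o\<^sub>L (Wm A o\<^sub>L A)) - ((Wp B o\<^sub>L B) o\<^sub>L x o\<^sub>L (Wm B o\<^sub>L B))"] t1 t2 t3
    by linarith
  also have "\<dots> \<le> 7 * a * d" using a0 d0 by (simp add: algebra_simps mult_nonneg_nonneg)
  finally show ?thesis unfolding d_def .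
qed

end




context tvna
begin

context
  fixes A :: "'h \<Rightarrow>\<^sub>L 'h"
  assumes AM: "A \<in> M" and aA: "adj A = - A" and nA: "norm A \<le> 1/3"
begin

lemma Wp_M: "Wp A \<in> M"
proof (rule M_inverse)
  show "id_blinfun - (1/2::real) *\<^sub>R A \<in> M" using AM M_id by (intro M_diff M_scaleR)
qed (use Wp_l[OF nA] Wp_r[OF nA] in auto)

lemma Wm_M: "Wm A \<in> M"
proof (rule M_inverse)
  show "id_blinfun + (1/2::real) *\<^sub>R A \<in> M" using AM M_id by (intro M_add M_scaleR)
qed (use Wm_l[OF nA] Wm_r[OF nA] in auto)

lemma adj_Wp: "adj (Wp A) = Wm A"
proof -
  have "adj ((id_blinfun - (1/2::real) *\<^sub>R A) o\<^sub>L Wp A) = adj id_blinfun"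
    using Wp_r[OF nA] by simp
  then have l: "adj (Wp A) o\<^sub>L (id_blinfun + (1/2::real) *\<^sub>R A) = id_blinfun"
    by (simp add: adj_compose adj_diff adj_id adj_scaleR aA)
  have "adj (Wp A) = adj (Wp A) o\<^sub>L ((id_blinfun + (1/2::real) *\<^sub>R A) o\<^sub>L Wm A)"
    using Wm_r[OF nA] by (simp add: bc_id_right)
  also have "\<dots> = (adj (Wp A) o\<^sub>L (id_blinfun + (1/2::real) *\<^sub>R A)) o\<^sub>L Wm A"
    by (simp add: bc_assoc)
  also have "\<dots> = Wm A" using l by (simp add: bc_id_left)
  finally show ?thesis .
qed

lemma cay_M: "cay A \<in> M"
  unfolding cay_def using Wp_M M_id by (intro M_diff M_scaleR)

lemma adj_cay: "adj (cay A) = cayc A"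
  unfolding cay_def cayc_def by (simp add: adj_diff adj_scaleR adj_id adj_Wp)

lemma cay_unitary: "cay A \<in> unitaries M"
  unfolding unitaries_def using cay_M adj_cay cayc_cay[OF nA] cay_cayc[OF nA] by simp

lemma Rm_M: "x \<in> M \<Longrightarrow> Rm A x \<in> M"
  unfolding Rm_def using AM Wp_M Wm_M by (intro M_diff M_compose) auto

end

end




lemma fixpoint_cube:
  fixes T :: "('p \<Rightarrow> real) \<Rightarrow> ('p \<Rightarrow> real)" and P :: "'p set"
  assumes fin: "finite P" and r0: "0 \<le> r" and th0: "0 \<le> \<theta>" and th1: "\<theta> < 1"
    and self: "\<And>c. (\<forall>p\<in>P. \<bar>c p\<bar> \<le> r) \<Longrightarrow> (\<forall>p\<in>P. \<bar>T c p\<bar> \<le> r)"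
    and contr: "\<And>c c' s. (\<forall>p\<in>P. \<bar>c p\<bar> \<le> r) \<Longrightarrow> (\<forall>p\<in>P. \<bar>c' p\<bar> \<le> r) \<Longrightarrow>
        (\<forall>p\<in>P. \<bar>c p - c' p\<bar> \<le> s) \<Longrightarrow> (\<forall>p\<in>P. \<bar>T c p - T c' p\<bar> \<le> \<theta> * s)"
  shows "\<exists>c. (\<forall>p\<in>P. \<bar>c p\<bar> \<le> r) \<and> (\<forall>p\<in>P. T c p = c p)"
proof -
  define it where "it k = (T ^^ k) (\<lambda>_. 0)" for k
  have it0: "it 0 = (\<lambda>_. 0)" and itS: "it (Suc k) = T (it k)" for k by (simp_all add: it_def)
  have cube: "\<forall>p\<in>P. \<bar>it k p\<bar> \<le> r" for k
  proof (induction k)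
    case 0 then show ?case using r0 by (simp add: it0)
  next
    case (Suc k) then show ?case by (simp add: itS self)
  qed
  have step: "\<forall>p\<in>P. \<bar>it (Suc k) p - it k p\<bar> \<le> \<theta> ^ k * r" for k
  proof (induction k)
    case 0 then show ?case using cube[of 1] by (simp add: it0)
  next
    case (Suc k)
    have "\<forall>p\<in>P. \<bar>T (it (Suc k)) p - T (it k) p\<bar> \<le> \<theta> * (\<theta> ^ k * r)"
      by (rule contr[OF cube cube Suc])
    then show ?case by (simp add: itS[of "Suc k"] itS[of k] mult.assoc)
  qed
  define L where "L p = (\<Sum>i. it (Suc i) p - it i p)" for p
  have conv: "(\<lambda>k. it k p) \<longlonglongrightarrow> L p" if pP: "p \<in> P" for p
  proof -
    have sg: "summable (\<lambda>i. \<theta> ^ i * r)" using th0 th1 by (intro summable_mult2) simp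
    have sm: "summable (\<lambda>i. it (Suc i) p - it i p)"
      by (rule summable_comparison_test[OF _ sg]) (use step pP in auto)
    have "(\<lambda>k. \<Sum>i<k. it (Suc i) p - it i p) \<longlonglongrightarrow> L p"
      unfolding L_def by (rule summable_LIMSEQ[OF sm])
    moreover have "(\<lambda>k. \<Sum>i<k. it (Suc i) p - it i p) = (\<lambda>k. it k p)"
    proof (rule ext)
      fix k show "(\<Sum>i<k. it (Suc i) p - it i p) = it k p"
        using sum_lessThan_telescope[of "\<lambda>i. it i p" k] by (simp add: it0)
    qed
    ultimately show ?thesis by simp
  qed
  have Lcube: "\<forall>p\<in>P. \<bar>L p\<bar> \<le> r"
  proof
    fix p assume pP: "p \<in> P"
    have "(\<lambda>k. \<bar>it k p\<bar>) \<longlonglongrightarrow> \<bar>L p\<bar>" by (intro tendsto_rabs conv pP)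
    then show "\<bar>L p\<bar> \<le> r" by (rule LIMSEQ_le_const2) (use cube pP in auto)
  qed
  define sk where "sk k = (\<Sum>q\<in>P. \<bar>L q - it k q\<bar>)" for k
  have sk0: "sk \<longlonglongrightarrow> 0"
  proof -
    have "(\<lambda>k. \<Sum>q\<in>P. \<bar>L q - it k q\<bar>) \<longlonglongrightarrow> (\<Sum>q\<in>P. \<bar>L q - L q\<bar>)"
      by (intro tendsto_sum tendsto_rabs tendsto_diff tendsto_const conv)
    moreover have "sk = (\<lambda>k. \<Sum>q\<in>P. \<bar>L q - it k q\<bar>)" by (rule ext) (simp add: sk_def)
    ultimately show ?thesis by simp
  qed
  have skb: "\<forall>p\<in>P. \<bar>L p - it k p\<bar> \<le> sk k" for k
    unfolding sk_def using fin by (auto intro: member_le_sum)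
  show ?thesis
  proof (intro exI[of _ L] conjI Lcube)
    show "\<forall>p\<in>P. T L p = L p"
    proof
    fix p assume pP: "p \<in> P"
    have b: "\<bar>T L p - T (it k) p\<bar> \<le> \<theta> * sk k" for k
      using contr[OF Lcube cube skb] pP by blast
    have "(\<lambda>k. T (it k) p - T L p) \<longlonglongrightarrow> 0"
    proof (rule Lim_null_comparison)
      show "\<forall>\<^sub>F k in sequentially. norm (T (it k) p - T L p) \<le> \<theta> * sk k"
        using b by (simp add: abs_minus_commute)
      show "(\<lambda>k. \<theta> * sk k) \<longlonglongrightarrow> 0" using tendsto_mult[OF tendsto_const sk0, of \<theta>] by simp
    qed
    then have "(\<lambda>k. T (it k) p) \<longlonglongrightarrow> T L p" by (rule LIM_zero_cancel)
    then have "(\<lambda>k. it (Suc k) p) \<longlonglongrightarrow> T L p" by (simp add: itS)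
    moreover have "(\<lambda>k. it (Suc k) p) \<longlonglongrightarrow> L p" using conv[OF pP] by (rule LIMSEQ_Suc)
    ultimately show "T L p = L p" by (rule LIMSEQ_unique)
  qed
  qed
qed




lemma norm_comp_le1: "norm a \<le> 1 \<Longrightarrow> norm b \<le> 1 \<Longrightarrow> norm (a o\<^sub>L b) \<le> 1"
  by (rule order_trans[OF norm_blinfun_compose]) (simp add: mult_le_one)

locale setup5 = tvna J M \<tau> for J :: "'h::{real_inner,complete_space} \<Rightarrow>\<^sub>L 'h" and M \<tau> +
  fixes m n :: nat and x y :: "nat \<Rightarrow> ('h \<Rightarrow>\<^sub>L 'h)"
  assumes m1: "m \<ge> 1" and n1: "n \<ge> 1"
    and xM: "\<forall>i<m. x i \<in> Msa1 M" and yM: "\<forall>j<n. y j \<in> Msa1 M"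
begin

definition "PP = {..<m} \<times> {..<n}"
definition "C p = commut (x (fst p)) (y (snd p))"
definition "Acoef c = (\<Sum>q\<in>PP. c q *\<^sub>R C q)"
definition "G p q = Re (tip \<tau> (C p) (C q))"
definition "NN = real (m * n)"
definition "eps = epsilon \<tau> m n x y"
definition "del = delta \<tau> m n x y"
definition "gam = gamma \<tau> m n x y"

lemma finPP: "finite PP" by (simp add: PP_def)
lemma cardPP: "real (card PP) = NN" by (simp add: PP_def NN_def card_cartesian_product)
lemma PP_ne: "(0, 0) \<in> PP" using m1 n1 by (simp add: PP_def)
lemma NN1: "NN \<ge> 1"
proof -
  have "1 * 1 \<le> m * n" using m1 n1 by (rule mult_le_mono)
  then show ?thesis unfolding NN_def by (metis mult_1 of_nat_1 of_nat_mono)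
qed

lemma x_M: "i < m \<Longrightarrow> x i \<in> M" and x_sa: "i < m \<Longrightarrow> adj (x i) = x i" and x_n: "i < m \<Longrightarrow> norm (x i) \<le> 1"
  using xM by (auto simp: Msa1_def selfadj_def)
lemma y_M: "j < n \<Longrightarrow> y j \<in> M" and y_sa: "j < n \<Longrightarrow> adj (y j) = y j" and y_n: "j < n \<Longrightarrow> norm (y j) \<le> 1"
  using yM by (auto simp: Msa1_def selfadj_def)

lemma C_M: "p \<in> PP \<Longrightarrow> C p \<in> M"
  unfolding C_def commut_def PP_def using x_M y_M by (auto intro!: M_diff M_compose)
lemma C_adj: "p \<in> PP \<Longrightarrow> adj (C p) = - C p"
  unfolding C_def commut_def PP_def using x_sa y_sa by (auto simp: adj_diff adj_compose)
lemma C_norm: "p \<in> PP \<Longrightarrow> norm (C p) \<le> 2"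
proof -
  assume p: "p \<in> PP"
  have xn: "norm (x (fst p)) \<le> 1" and yn: "norm (y (snd p)) \<le> 1" using p x_n y_n by (auto simp: PP_def)
  have a: "norm (x (fst p) o\<^sub>L y (snd p)) \<le> 1" and b: "norm (y (snd p) o\<^sub>L x (fst p)) \<le> 1"
    using norm_comp_le1 xn yn by auto
  show ?thesis unfolding C_def commut_def using norm_triangle_ineq4 a b by (smt (verit))
qed

lemma A_M: "Acoef c \<in> M" unfolding Acoef_def using C_M by (intro M_sum M_scaleR) auto
lemma A_adj: "adj (Acoef c) = - Acoef c"
  unfolding Acoef_def by (simp add: adj_sum adj_scaleR C_adj sum_negf[symmetric])
lemma A_norm:
  assumes "\<forall>p\<in>PP. \<bar>c p\<bar> \<le> s"
  shows "norm (Acoef c) \<le> 2 * NN * s"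
proof -
  have "norm (Acoef c) \<le> (\<Sum>q\<in>PP. norm (c q *\<^sub>R C q))" unfolding Acoef_def by (rule norm_sum)
  also have "\<dots> \<le> (\<Sum>q\<in>PP. 2 * s)"
  proof (rule sum_mono)
    fix q assume q: "q \<in> PP"
    have "norm (c q *\<^sub>R C q) = \<bar>c q\<bar> * norm (C q)" by simp
    also have "\<dots> \<le> s * 2" using assms q C_norm[OF q] by (intro mult_mono) auto
    finally show "norm (c q *\<^sub>R C q) \<le> 2 * s" by simp
  qed
  also have "\<dots> = 2 * NN * s" using cardPP by simp
  finally show ?thesis .
qed
lemma A_diff: "Acoef c - Acoef c' = Acoef (\<lambda>p. c p - c' p)"
  unfolding Acoef_def by (simp add: scaleR_diff_left sum_subtractf)

end




context setup5
begin

lemma eps_set: "{cmod (\<tau> (x i o\<^sub>L y j)) | i j. i < m \<and> j < n} = (\<lambda>p. cmod (\<tau> (x (fst p) o\<^sub>L y (snd p)))) ` PP"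
  by (auto simp: PP_def image_iff; blast)

lemma eps_ge: "p \<in> PP \<Longrightarrow> cmod (\<tau> (x (fst p) o\<^sub>L y (snd p))) \<le> eps"
  unfolding eps_def epsilon_def eps_set by (rule Max_ge) (auto simp: finPP)

lemma eps_nonneg: "0 \<le> eps"
  using eps_ge[OF PP_ne] norm_ge_zero order_trans by blast

lemma xy_real: "p \<in> PP \<Longrightarrow> Im (\<tau> (x (fst p) o\<^sub>L y (snd p))) = 0"
  by (rule tau_real_prod) (auto simp: PP_def x_M x_sa y_M y_sa)

lemma eps_le1: "eps \<le> 1"
  unfolding eps_def epsilon_def eps_set
proof (rule Max.boundedI)
  show "finite ((\<lambda>p. cmod (\<tau> (x (fst p) o\<^sub>L y (snd p)))) ` PP)" by (simp add: finPP)
  show "(\<lambda>p. cmod (\<tau> (x (fst p) o\<^sub>L y (snd p)))) ` PP \<noteq> {}" using PP_ne by auto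
  fix a assume "a \<in> (\<lambda>p. cmod (\<tau> (x (fst p) o\<^sub>L y (snd p)))) ` PP"
  then obtain p where p: "p \<in> PP" and a: "a = cmod (\<tau> (x (fst p) o\<^sub>L y (snd p)))" by auto
  have xyM: "x (fst p) o\<^sub>L y (snd p) \<in> M" using p by (auto simp: PP_def x_M y_M M_compose)
  have "a = \<bar>Re (\<tau> (x (fst p) o\<^sub>L y (snd p)))\<bar>" unfolding a using xy_real[OF p] by (simp add: cmod_eq_Re)
  also have "\<dots> \<le> norm (x (fst p) o\<^sub>L y (snd p))" by (rule tau_Re_bound[OF xyM])
  also have "\<dots> \<le> 1" using p by (intro norm_comp_le1) (auto simp: PP_def x_n y_n)
  finally show "a \<le> 1" .
qed

lemma del_set: "{norm2 \<tau> (commut (x i) (y j)) | i j. i < m \<and> j < n} = (\<lambda>p. norm2 \<tau> (C p)) ` PP"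
  by (auto simp: PP_def image_iff C_def; blast)

lemma G_diag: "p \<in> PP \<Longrightarrow> G p p = (norm2 \<tau> (C p))\<^sup>2" and G_diag_nonneg: "p \<in> PP \<Longrightarrow> 0 \<le> G p p"
  using tau_sq_nonneg[OF C_M] by (auto simp: G_def tip_def norm2_def)

lemma del_le: "p \<in> PP \<Longrightarrow> del \<le> norm2 \<tau> (C p)"
  unfolding del_def delta_def del_set by (rule Min_le) (auto simp: finPP)

lemma del_nonneg: "0 \<le> del"
  unfolding del_def delta_def del_set
proof (rule Min.boundedI)
  show "finite ((\<lambda>p. norm2 \<tau> (C p)) ` PP)" by (simp add: finPP)
  show "(\<lambda>p. norm2 \<tau> (C p)) ` PP \<noteq> {}" using PP_ne by auto
  fix a assume "a \<in> (\<lambda>p. norm2 \<tau> (C p)) ` PP"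
  then obtain p where p: "p \<in> PP" and a: "a = norm2 \<tau> (C p)" by auto
  show "0 \<le> a" unfolding a norm2_def using tau_sq_nonneg[OF C_M[OF p]] by simp
qed

lemma del2_le: "p \<in> PP \<Longrightarrow> del\<^sup>2 \<le> G p p"
  unfolding G_diag by (intro power_mono del_le del_nonneg)

lemma gam_ge:
  assumes p: "p \<in> PP" and q: "q \<in> PP" and pq: "p \<noteq> q"
  shows "cmod (tip \<tau> (C p) (C q)) \<le> gam"
proof -
  define S where "S = {cmod (tip \<tau> (commut (x i) (y j)) (commut (x i') (y j'))) | i j i' j'.
        i < m \<and> j < n \<and> i' < m \<and> j' < n \<and> (i, j) \<noteq> (i', j')}"
  have "S \<subseteq> (\<lambda>pq. cmod (tip \<tau> (C (fst pq)) (C (snd pq)))) ` (PP \<times> PP)"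
    unfolding S_def by (auto simp: PP_def C_def image_iff; blast)
  then have finS: "finite S" by (rule finite_subset) (simp add: finPP)
  have "cmod (tip \<tau> (C p) (C q)) \<in> S"
    unfolding S_def C_def using p q pq by (cases p, cases q) (auto simp: PP_def)
  then have "cmod (tip \<tau> (C p) (C q)) \<le> Max (insert 0 S)" using finS by (intro Max_ge) auto
  then show ?thesis unfolding gam_def gamma_def S_def .
qed

lemma gam_nonneg: "0 \<le> gam"
proof -
  define S where "S = {cmod (tip \<tau> (commut (x i) (y j)) (commut (x i') (y j'))) | i j i' j'.
        i < m \<and> j < n \<and> i' < m \<and> j' < n \<and> (i, j) \<noteq> (i', j')}"
  have "S \<subseteq> (\<lambda>pq. cmod (tip \<tau> (C (fst pq)) (C (snd pq)))) ` (PP \<times> PP)"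
    unfolding S_def by (auto simp: PP_def C_def image_iff; blast)
  then have finS: "finite S" by (rule finite_subset) (simp add: finPP)
  have "0 \<le> Max (insert 0 S)" using finS by (intro Max_ge) auto
  then show ?thesis unfolding gam_def gamma_def S_def .
qed

lemma G_off: "p \<in> PP \<Longrightarrow> q \<in> PP \<Longrightarrow> p \<noteq> q \<Longrightarrow> \<bar>G p q\<bar> \<le> gam"
  unfolding G_def using gam_ge abs_Re_le_cmod order_trans by blast

end




context setup5
begin

lemma xp_M: "p \<in> PP \<Longrightarrow> x (fst p) \<in> M" and yp_M: "p \<in> PP \<Longrightarrow> y (snd p) \<in> M"
  by (auto simp: PP_def x_M y_M)

lemma tau_AC:
  assumes p: "p \<in> PP"
  shows "Re (\<tau> (Acoef c o\<^sub>L C p)) = - (\<Sum>q\<in>PP. c q * G p q)"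
proof -
  have "Acoef c o\<^sub>L C p = (\<Sum>q\<in>PP. c q *\<^sub>R (C q o\<^sub>L C p))"
    unfolding Acoef_def by (simp add: bc_sum_left bc_scaleR_left)
  then have "\<tau> (Acoef c o\<^sub>L C p) = (\<Sum>q\<in>PP. of_real (c q) * \<tau> (C q o\<^sub>L C p))"
    using C_M p by (simp add: tau_sum M_scaleR M_compose tau_scaleR)
  also have "\<dots> = (\<Sum>q\<in>PP. of_real (c q) * (- tip \<tau> (C p) (C q)))"
  proof (rule sum.cong[OF refl])
    fix q assume q: "q \<in> PP"
    have "tip \<tau> (C p) (C q) = \<tau> ((- C q) o\<^sub>L C p)" unfolding tip_def C_adj[OF q] ..
    also have "\<dots> = - \<tau> (C q o\<^sub>L C p)" using C_M p q by (simp add: bc_minus_left tau_uminus M_compose)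
    finally show "of_real (c q) * \<tau> (C q o\<^sub>L C p) = of_real (c q) * (- tip \<tau> (C p) (C q))" by simp
  qed
  finally show ?thesis by (simp add: G_def Re_sum sum_negf)
qed

lemma trace_expand:
  assumes p: "p \<in> PP" and nA: "norm (Acoef c) \<le> 1/3"
  shows "Re (\<tau> (cay (Acoef c) o\<^sub>L x (fst p) o\<^sub>L cayc (Acoef c) o\<^sub>L y (snd p)))
    = Re (\<tau> (x (fst p) o\<^sub>L y (snd p))) - (\<Sum>q\<in>PP. c q * G p q) + Re (\<tau> (Rm (Acoef c) (x (fst p)) o\<^sub>L y (snd p)))"
proof -
  define A where "A = Acoef c"
  define xi where "xi = x (fst p)"
  define yj where "yj = y (snd p)"
  have AM: "A \<in> M" unfolding A_def by (rule A_M)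
  have xiM: "xi \<in> M" unfolding xi_def using p by (rule xp_M)
  have yjM: "yj \<in> M" unfolding yj_def using p by (rule yp_M)
  have RM: "Rm A xi \<in> M" unfolding A_def using A_M A_adj nA xiM by (rule Rm_M)
  have e1: "cay A o\<^sub>L xi o\<^sub>L cayc A o\<^sub>L yj = (xi o\<^sub>L yj) + ((((A o\<^sub>L xi) - (xi o\<^sub>L A)) o\<^sub>L yj) + (Rm A xi o\<^sub>L yj))"
    unfolding cay_expand[OF nA[folded A_def]] by (simp add: bc_add_left add.assoc)
  have e2: "((A o\<^sub>L xi) - (xi o\<^sub>L A)) o\<^sub>L yj = (A o\<^sub>L (xi o\<^sub>L yj)) - (xi o\<^sub>L (A o\<^sub>L yj))"
    by (simp add: bc_diff_left bc_assoc)
  have e3: "\<tau> (xi o\<^sub>L (A o\<^sub>L yj)) = \<tau> (A o\<^sub>L (yj o\<^sub>L xi))"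
    using tau_comm[OF xiM M_compose[OF AM yjM]] by (simp add: bc_assoc)
  have e4: "A o\<^sub>L C p = (A o\<^sub>L (xi o\<^sub>L yj)) - (A o\<^sub>L (yj o\<^sub>L xi))"
    unfolding C_def commut_def xi_def yj_def by (simp add: bc_diff_right)
  have "\<tau> (((A o\<^sub>L xi) - (xi o\<^sub>L A)) o\<^sub>L yj) = \<tau> (A o\<^sub>L C p)"
    unfolding e2 e4 using xiM AM yjM by (simp add: tau_diff M_compose e3)
  then have "\<tau> (cay A o\<^sub>L xi o\<^sub>L cayc A o\<^sub>L yj) = \<tau> (xi o\<^sub>L yj) + (\<tau> (A o\<^sub>L C p) + \<tau> (Rm A xi o\<^sub>L yj))"
  proof -
    have m1: "xi o\<^sub>L yj \<in> M" using xiM yjM by (rule M_compose)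
    have m2: "((A o\<^sub>L xi) - (xi o\<^sub>L A)) o\<^sub>L yj \<in> M" using xiM yjM AM by (intro M_compose M_diff)
    have m3: "Rm A xi o\<^sub>L yj \<in> M" using RM yjM by (rule M_compose)
    show ?thesis unfolding e1 tau_add[OF m1 M_add[OF m2 m3]] tau_add[OF m2 m3] \<open>\<tau> (((A o\<^sub>L xi) - (xi o\<^sub>L A)) o\<^sub>L yj) = \<tau> (A o\<^sub>L C p)\<close> ..
  qed
  then show ?thesis using tau_AC[OF p, of c] unfolding A_def xi_def yj_def by simp
qed

end




context setup5
begin

definition "V c p = cay (Acoef c) o\<^sub>L x (fst p) o\<^sub>L cayc (Acoef c) o\<^sub>L y (snd p)"
definition "Tm c p = c p + Re (\<tau> (V c p)) / G p p"
definition "rho c p = Re (\<tau> (Rm (Acoef c) (x (fst p)) o\<^sub>L y (snd p)))"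
definition "Soff c p = (\<Sum>q\<in>PP - {p}. c q * G p q)"
definition "ee p = Re (\<tau> (x (fst p) o\<^sub>L y (snd p)))"

lemma Tm_eq:
  assumes p: "p \<in> PP" and nA: "norm (Acoef c) \<le> 1/3" and Gp: "G p p \<noteq> 0"
  shows "Tm c p = (ee p - Soff c p + rho c p) / G p p"
proof -
  have "(\<Sum>q\<in>PP. c q * G p q) = c p * G p p + Soff c p"
    unfolding Soff_def by (rule sum.remove[OF finPP p])
  then have "Re (\<tau> (V c p)) = ee p - (c p * G p p + Soff c p) + rho c p"
    using trace_expand[OF p nA] by (simp add: V_def ee_def rho_def)
  then show ?thesis unfolding Tm_def using Gp by (simp add: field_simps)
qed

lemma ee_bound: "p \<in> PP \<Longrightarrow> \<bar>ee p\<bar> \<le> eps"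
  unfolding ee_def using abs_Re_le_cmod eps_ge order_trans by blast

lemma rho_bound:
  assumes p: "p \<in> PP" and nA: "norm (Acoef c) \<le> 1/3"
  shows "\<bar>rho c p\<bar> \<le> 66/25 * (norm (Acoef c))\<^sup>2"
proof -
  have RM: "Rm (Acoef c) (x (fst p)) \<in> M" using A_M A_adj nA xp_M[OF p] by (rule Rm_M)
  have "\<bar>rho c p\<bar> \<le> norm (Rm (Acoef c) (x (fst p)) o\<^sub>L y (snd p))"
    unfolding rho_def by (rule tau_Re_bound[OF M_compose[OF RM yp_M[OF p]]])
  also have "\<dots> \<le> norm (Rm (Acoef c) (x (fst p))) * norm (y (snd p))" by (rule norm_blinfun_compose)
  also have "\<dots> \<le> norm (Rm (Acoef c) (x (fst p)))"
    using p by (intro mult_left_le) (auto simp: PP_def y_n)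
  also have "\<dots> \<le> 66/25 * (norm (Acoef c))\<^sup>2"
    using p by (intro norm_Rm nA) (auto simp: PP_def x_n)
  finally show ?thesis .
qed

lemma rho_lip:
  assumes p: "p \<in> PP" and nA: "norm (Acoef c) \<le> a" and nA': "norm (Acoef c') \<le> a" and a3: "a \<le> 1/3"
  shows "\<bar>rho c p - rho c' p\<bar> \<le> 7 * a * norm (Acoef c - Acoef c')"
proof -
  have n3: "norm (Acoef c) \<le> 1/3" "norm (Acoef c') \<le> 1/3" using nA nA' a3 by auto
  have RM: "Rm (Acoef c) (x (fst p)) \<in> M" using A_M A_adj n3(1) xp_M[OF p] by (rule Rm_M)
  have RM': "Rm (Acoef c') (x (fst p)) \<in> M" using A_M A_adj n3(2) xp_M[OF p] by (rule Rm_M)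
  have eq: "rho c p - rho c' p = Re (\<tau> ((Rm (Acoef c) (x (fst p)) - Rm (Acoef c') (x (fst p))) o\<^sub>L y (snd p)))"
    unfolding rho_def bc_diff_left
    using tau_diff[OF M_compose[OF RM yp_M[OF p]] M_compose[OF RM' yp_M[OF p]]] by simp
  have "\<bar>rho c p - rho c' p\<bar> \<le> norm ((Rm (Acoef c) (x (fst p)) - Rm (Acoef c') (x (fst p))) o\<^sub>L y (snd p))"
    unfolding eq by (rule tau_Re_bound[OF M_compose[OF M_diff[OF RM RM'] yp_M[OF p]]])
  also have "\<dots> \<le> norm (Rm (Acoef c) (x (fst p)) - Rm (Acoef c') (x (fst p))) * norm (y (snd p))"
    by (rule norm_blinfun_compose)
  also have "\<dots> \<le> norm (Rm (Acoef c) (x (fst p)) - Rm (Acoef c') (x (fst p)))"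
    using p by (intro mult_left_le) (auto simp: PP_def y_n)
  also have "\<dots> \<le> 7 * a * norm (Acoef c - Acoef c')"
    using p by (intro lip_Rm nA nA' a3) (auto simp: PP_def x_n)
  finally show ?thesis .
qed

lemma Soff_bound:
  assumes p: "p \<in> PP" and c: "\<forall>q\<in>PP. \<bar>c q\<bar> \<le> s"
  shows "\<bar>Soff c p\<bar> \<le> (NN - 1) * gam * s"
proof -
  have "\<bar>Soff c p\<bar> \<le> (\<Sum>q\<in>PP - {p}. \<bar>c q * G p q\<bar>)" unfolding Soff_def by (rule sum_abs)
  also have "\<dots> \<le> (\<Sum>q\<in>PP - {p}. s * gam)"
  proof (rule sum_mono)
    fix q assume q: "q \<in> PP - {p}"
    have "\<bar>c q * G p q\<bar> = \<bar>c q\<bar> * \<bar>G p q\<bar>" by (simp add: abs_mult)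
    also have "\<dots> \<le> s * gam" using c q G_off[OF p, of q] by (intro mult_mono) auto
    finally show "\<bar>c q * G p q\<bar> \<le> s * gam" .
  qed
  also have "\<dots> = (NN - 1) * gam * s"
  proof -
    have "0 < card PP" using finPP p card_gt_0_iff by blast
    then have "real (card (PP - {p})) = NN - 1"
      using cardPP p finPP by (simp add: card_Diff_singleton of_nat_diff)
    then show ?thesis by simp
  qed
  finally show ?thesis .
qed

lemma Soff_diff: "Soff c p - Soff c' p = Soff (\<lambda>q. c q - c' q) p"
  unfolding Soff_def by (simp add: sum_subtractf left_diff_distrib)

end




context setup5
begin

definition "DD = del\<^sup>2 - (NN - 1) * gam"
definition "tt = NN * eps / DD"
definition "rr = 2 * eps / DD"
definition "th = ((NN - 1) * gam + 56 * NN * tt) / del\<^sup>2"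

context
  assumes hyp: "13 * NN * sqrt eps < DD"
begin

lemma DD_pos: "0 < DD"
proof -
  have "0 \<le> 13 * NN * sqrt eps" using NN1 eps_nonneg by simp
  then show ?thesis using hyp by linarith
qed

lemma del2_ge: "DD \<le> del\<^sup>2" unfolding DD_def using NN1 gam_nonneg by simp
lemma del2_pos: "0 < del\<^sup>2" using DD_pos del2_ge by linarith

lemma tt_nonneg: "0 \<le> tt" unfolding tt_def using NN1 eps_nonneg DD_pos by simp
lemma tt_DD: "tt * DD = NN * eps" unfolding tt_def using DD_pos by simp

lemma tt_sqrt: "13 * tt \<le> sqrt eps"
proof -
  have "13 * NN * sqrt eps * tt \<le> DD * tt" using hyp tt_nonneg by (intro mult_right_mono) auto
  also have "\<dots> = NN * eps" using tt_DD by (simp add: mult.commute)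
  finally have "NN * (13 * sqrt eps * tt) \<le> NN * eps" by (simp add: algebra_simps)
  then have a: "13 * sqrt eps * tt \<le> eps" using NN1 by simp
  show ?thesis
  proof (cases "sqrt eps = 0")
    case True
    then have "eps = 0" using eps_nonneg by simp
    then show ?thesis using True by (simp add: tt_def)
  next
    case False
    then have sp: "0 < sqrt eps" using eps_nonneg by simp
    have h: "sqrt eps * (13 * tt) \<le> sqrt eps * sqrt eps" using a eps_nonneg by (simp add: algebra_simps)
    show ?thesis using mult_left_le_imp_le[OF h sp] .
  qed
qed

lemma tt_sq: "169 * tt\<^sup>2 \<le> eps"
proof -
  have "(13 * tt)\<^sup>2 \<le> (sqrt eps)\<^sup>2" using tt_sqrt tt_nonneg by (intro power_mono) auto
  then show ?thesis using eps_nonneg by (simp add: power_mult_distrib)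
qed

lemma tt_13: "tt \<le> 1/13"
proof -
  have "sqrt eps \<le> 1" using eps_le1 by simp
  then show ?thesis using tt_sqrt by linarith
qed

lemma NNtt: "169 * NN * tt \<le> DD"
proof -
  have "(13 * NN * sqrt eps)\<^sup>2 \<le> DD\<^sup>2" using hyp NN1 eps_nonneg by (intro power_mono) auto
  then have b: "169 * NN\<^sup>2 * eps \<le> DD\<^sup>2" using eps_nonneg by (simp add: power_mult_distrib)
  have "169 * NN * tt = (169 * NN\<^sup>2 * eps) / DD" unfolding tt_def by (simp add: power2_eq_square)
  also have "\<dots> \<le> DD\<^sup>2 / DD" using b DD_pos by (intro divide_right_mono) auto
  also have "\<dots> = DD" using DD_pos by (simp add: power2_eq_square)
  finally show ?thesis .
qed

lemma rr_nonneg: "0 \<le> rr" unfolding rr_def using eps_nonneg DD_pos by simp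
lemma rr_DD: "rr * DD = 2 * eps" unfolding rr_def using DD_pos by simp
lemma rr_tt: "2 * NN * rr = 4 * tt" unfolding rr_def tt_def by simp

lemma cube_norm: "\<forall>p\<in>PP. \<bar>c p\<bar> \<le> rr \<Longrightarrow> norm (Acoef c) \<le> 4 * tt"
  using A_norm[of c rr] rr_tt by simp

lemma four_tt: "4 * tt \<le> 1/3" using tt_13 by simp

lemma Tm_self:
  assumes c: "\<forall>p\<in>PP. \<bar>c p\<bar> \<le> rr"
  shows "\<forall>p\<in>PP. \<bar>Tm c p\<bar> \<le> rr"
proof
  fix p assume p: "p \<in> PP"
  have nA: "norm (Acoef c) \<le> 4 * tt" by (rule cube_norm[OF c])
  have nA3: "norm (Acoef c) \<le> 1/3" using nA four_tt by simp
  have Gp: "del\<^sup>2 \<le> G p p" by (rule del2_le[OF p])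
  have Gpos: "0 < G p p" using Gp del2_pos by linarith
  have r1: "\<bar>rho c p\<bar> \<le> eps"
  proof -
    have "\<bar>rho c p\<bar> \<le> 66/25 * (norm (Acoef c))\<^sup>2" by (rule rho_bound[OF p nA3])
    also have "\<dots> \<le> 66/25 * (4 * tt)\<^sup>2" using nA by (intro mult_left_mono power_mono) auto
    also have "\<dots> \<le> eps"
    proof -
      have "(4 * tt)\<^sup>2 = 16 * tt\<^sup>2" by (simp add: power_mult_distrib)
      then show ?thesis using tt_sq zero_le_power2[of tt] by linarith
    qed
    finally show ?thesis .
  qed
  have num: "\<bar>ee p - Soff c p + rho c p\<bar> \<le> rr * G p p"
  proof -
    have "\<bar>ee p - Soff c p + rho c p\<bar> \<le> eps + (NN - 1) * gam * rr + eps"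
      using ee_bound[OF p] Soff_bound[OF p c] r1 by linarith
    also have "\<dots> = rr * del\<^sup>2" using rr_DD unfolding DD_def by (simp add: algebra_simps)
    also have "\<dots> \<le> rr * G p p" using Gp rr_nonneg by (intro mult_left_mono) auto
    finally show ?thesis .
  qed
  have "\<bar>Tm c p\<bar> = \<bar>ee p - Soff c p + rho c p\<bar> / G p p"
    using Tm_eq[OF p nA3] Gpos by simp
  also have "\<dots> \<le> rr" using num Gpos by (simp add: divide_le_eq)
  finally show "\<bar>Tm c p\<bar> \<le> rr" .
qed

lemma th_nonneg: "0 \<le> th" unfolding th_def using NN1 gam_nonneg tt_nonneg del2_pos by simp
lemma th_less1: "th < 1"
proof -
  have "56 * NN * tt < DD" using NNtt DD_pos NN1 tt_nonneg by linarith
  then have "(NN - 1) * gam + 56 * NN * tt < del\<^sup>2" unfolding DD_def by linarith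
  then show ?thesis unfolding th_def using del2_pos by simp
qed

lemma Tm_contr:
  assumes c: "\<forall>p\<in>PP. \<bar>c p\<bar> \<le> rr" and c': "\<forall>p\<in>PP. \<bar>c' p\<bar> \<le> rr"
    and s: "\<forall>p\<in>PP. \<bar>c p - c' p\<bar> \<le> s"
  shows "\<forall>p\<in>PP. \<bar>Tm c p - Tm c' p\<bar> \<le> th * s"
proof
  fix p assume p: "p \<in> PP"
  have s0: "0 \<le> s" using s PP_ne by force
  have nA: "norm (Acoef c) \<le> 4 * tt" by (rule cube_norm[OF c])
  have nA': "norm (Acoef c') \<le> 4 * tt" by (rule cube_norm[OF c'])
  have nA3: "norm (Acoef c) \<le> 1/3" "norm (Acoef c') \<le> 1/3" using nA nA' four_tt by auto
  have Gp: "del\<^sup>2 \<le> G p p" by (rule del2_le[OF p])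
  have Gpos: "0 < G p p" using Gp del2_pos by linarith
  have dA: "norm (Acoef c - Acoef c') \<le> 2 * NN * s"
    unfolding A_diff by (rule A_norm) (use s in auto)
  have r: "\<bar>rho c p - rho c' p\<bar> \<le> 56 * NN * tt * s"
  proof -
    have "\<bar>rho c p - rho c' p\<bar> \<le> 7 * (4 * tt) * norm (Acoef c - Acoef c')"
      by (rule rho_lip[OF p nA nA' four_tt])
    also have "\<dots> \<le> 7 * (4 * tt) * (2 * NN * s)" using dA tt_nonneg by (intro mult_left_mono) auto
    finally show ?thesis by (simp add: algebra_simps)
  qed
  have so: "\<bar>Soff (\<lambda>q. c q - c' q) p\<bar> \<le> (NN - 1) * gam * s" by (rule Soff_bound[OF p s])
  have "Tm c p - Tm c' p = (- Soff (\<lambda>q. c q - c' q) p + (rho c p - rho c' p)) / G p p"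
    unfolding Tm_eq[OF p nA3(1) Gpos[THEN less_imp_neq, symmetric]] Tm_eq[OF p nA3(2) Gpos[THEN less_imp_neq, symmetric]]
    using Gpos Soff_diff[of c p c']
    by (simp add: field_simps)
  then have "\<bar>Tm c p - Tm c' p\<bar> = \<bar>- Soff (\<lambda>q. c q - c' q) p + (rho c p - rho c' p)\<bar> / G p p"
    using Gpos by simp
  also have "\<dots> \<le> ((NN - 1) * gam * s + 56 * NN * tt * s) / G p p"
    using so r Gpos by (intro divide_right_mono) linarith+
  also have "\<dots> \<le> ((NN - 1) * gam * s + 56 * NN * tt * s) / del\<^sup>2"
    using Gp del2_pos NN1 gam_nonneg s0 tt_nonneg Gpos by (intro divide_left_mono) (auto intro: mult_pos_pos)
  also have "\<dots> = th * s" unfolding th_def by (simp add: algebra_simps)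
  finally show "\<bar>Tm c p - Tm c' p\<bar> \<le> th * s" .
qed

lemma exists_fix: "\<exists>c. (\<forall>p\<in>PP. \<bar>c p\<bar> \<le> rr) \<and> (\<forall>p\<in>PP. Tm c p = c p)"
  by (rule fixpoint_cube[OF finPP rr_nonneg th_nonneg th_less1 Tm_self Tm_contr])

end

end




context setup5
begin

lemma final:
  assumes hyp: "13 * NN * sqrt eps < DD"
  shows "\<exists>v \<in> unitaries M. norm (v - id_blinfun) \<le> 8 * NN * eps / DD
           \<and> 8 * NN * eps / DD \<le> 8 / 13 * sqrt eps
           \<and> epsilon \<tau> m n (conj_tuple v x) y = 0"
proof -
  obtain c where cube: "\<forall>p\<in>PP. \<bar>c p\<bar> \<le> rr" and fixc: "\<forall>p\<in>PP. Tm c p = c p"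
    using exists_fix[OF hyp] by blast
  define A where "A = Acoef c"
  have nA: "norm A \<le> 4 * tt" unfolding A_def by (rule cube_norm[OF hyp cube])
  have nA3: "norm A \<le> 1/3" using nA four_tt[OF hyp] by simp
  have AM: "A \<in> M" and aA: "adj A = - A" unfolding A_def by (rule A_M, rule A_adj)
  define v where "v = cay A"
  have vU: "v \<in> unitaries M" unfolding v_def by (rule cay_unitary[OF AM aA nA3])
  have adjv: "adj v = cayc A" unfolding v_def by (rule adj_cay[OF AM aA nA3])
  have adjv2: "adj (cay (Acoef c)) = cayc (Acoef c)" using adjv unfolding v_def A_def .
  have adjc: "adj (cayc A) = cay A" using adj_cay[OF AM aA nA3] adj_adj[of "cay A"] by simp
  have vM: "cay A \<in> M" by (rule cay_M[OF AM aA nA3])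
  have vcM: "cayc A \<in> M" using M_adj[OF vM] adj_cay[OF AM aA nA3] by simp
  have tau0: "\<tau> (V c p) = 0" if p: "p \<in> PP" for p
  proof -
    have Gpos: "0 < G p p" using del2_le[OF p] del2_pos[OF hyp] by linarith
    have "Re (\<tau> (V c p)) / G p p = 0" using fixc p unfolding Tm_def by simp
    then have re: "Re (\<tau> (V c p)) = 0" using Gpos by simp
    define S where "S = cay A o\<^sub>L x (fst p) o\<^sub>L cayc A"
    have SM: "S \<in> M" unfolding S_def using vM vcM xp_M[OF p] by (intro M_compose)
    have aS: "adj S = S" unfolding S_def
      using x_sa p by (simp add: adj_compose adjc adj_cay[OF AM aA nA3] bc_assoc PP_def mem_Times_iff)
    have "Im (\<tau> (S o\<^sub>L y (snd p))) = 0"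
      by (rule tau_real_prod[OF SM aS yp_M[OF p]]) (use y_sa p in \<open>auto simp: PP_def\<close>)
    then have im: "Im (\<tau> (V c p)) = 0" unfolding V_def S_def A_def by simp
    show ?thesis using re im by (simp add: complex_eq_iff)
  qed
  have epsset: "{cmod (\<tau> (conj_tuple v x i o\<^sub>L y j)) | i j. i < m \<and> j < n} = {0}"
  proof
    show "{cmod (\<tau> (conj_tuple v x i o\<^sub>L y j)) | i j. i < m \<and> j < n} \<subseteq> {0}"
    proof
      fix a assume "a \<in> {cmod (\<tau> (conj_tuple v x i o\<^sub>L y j)) | i j. i < m \<and> j < n}"
      then obtain i j where ij: "i < m" "j < n" and a: "a = cmod (\<tau> (conj_tuple v x i o\<^sub>L y j))" by blast
      have "(i, j) \<in> PP" using ij by (simp add: PP_def)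
      from tau0[OF this] have "\<tau> (conj_tuple v x i o\<^sub>L y j) = 0"
        by (simp add: V_def conj_tuple_def adjv2 v_def A_def)
      then show "a \<in> {0}" using a by simp
    qed
    show "{0} \<subseteq> {cmod (\<tau> (conj_tuple v x i o\<^sub>L y j)) | i j. i < m \<and> j < n}"
    proof -
      have "(0, 0) \<in> PP" by (rule PP_ne)
      from tau0[OF this] have "\<tau> (conj_tuple v x 0 o\<^sub>L y 0) = 0"
        by (simp add: V_def conj_tuple_def adjv2 v_def A_def)
      then show ?thesis using m1 n1 by force
    qed
  qed
  have e0: "epsilon \<tau> m n (conj_tuple v x) y = 0" unfolding epsilon_def epsset by simp
  have ttdef: "8 * NN * eps / DD = 8 * tt" unfolding tt_def by simp
  have nv: "norm (v - id_blinfun) \<le> 8 * NN * eps / DD"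
  proof -
    have "norm (v - id_blinfun) = norm (Wp A o\<^sub>L A)" unfolding v_def cay_minus_id[OF nA3] ..
    also have "\<dots> \<le> 6/5 * norm A" by (rule norm_WpA[OF nA3])
    also have "\<dots> \<le> 6/5 * (4 * tt)" using nA by simp
    also have "\<dots> \<le> 8 * tt" using tt_nonneg[OF hyp] by simp
    finally show ?thesis unfolding ttdef .
  qed
  have b2: "8 * NN * eps / DD \<le> 8 / 13 * sqrt eps" unfolding ttdef using tt_sqrt[OF hyp] by simp
  show ?thesis using vU nv b2 e0 by blast
qed

end



theorem lemma5p2:
  fixes J :: "'h::{real_inner,complete_space} \<Rightarrow>\<^sub>L 'h"
    and M :: "('h \<Rightarrow>\<^sub>L 'h) set"
    and \<tau> :: "('h \<Rightarrow>\<^sub>L 'h) \<Rightarrow> complex"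
    and m n :: nat
    and x y :: "nat \<Rightarrow> ('h \<Rightarrow>\<^sub>L 'h)"
  assumes "tracial_vNa J M \<tau>"
    and "m \<ge> 1" and "n \<ge> 1"
    and "\<forall>i<m. x i \<in> Msa1 M"
    and "\<forall>j<n. y j \<in> Msa1 M"
    and "13 * real (m * n) * sqrt (epsilon \<tau> m n x y)
           < (delta \<tau> m n x y)\<^sup>2 - (real (m * n) - 1) * gamma \<tau> m n x y"
  shows "\<exists>v \<in> unitaries M.
           norm (v - id_blinfun) \<le> 8 * real (m * n) * epsilon \<tau> m n x y
               / ((delta \<tau> m n x y)\<^sup>2 - (real (m * n) - 1) * gamma \<tau> m n x y)
         \<and> 8 * real (m * n) * epsilon \<tau> m n x y
               / ((delta \<tau> m n x y)\<^sup>2 - (real (m * n) - 1) * gamma \<tau> m n x y)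
             \<le> 8 / 13 * sqrt (epsilon \<tau> m n x y)
         \<and> epsilon \<tau> m n (conj_tuple v x) y = 0"
proof -
  interpret s: setup5 J M \<tau> m n x y
    by (unfold_locales; (rule assms)?)
  have h: "13 * s.NN * sqrt s.eps < s.DD"
    using assms(6) unfolding s.NN_def s.eps_def s.DD_def s.del_def s.gam_def .
  show ?thesis
    using s.final[OF h] unfolding s.NN_def s.eps_def s.DD_def s.del_def s.gam_def .
qed

end
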